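(* Let $n\ge2$ and $\rho\ge0$. The $n$ eigenvalues $\lambda_0(\rho),\dots,\lambda_{n-1}(\rho)$ of $K_n(\rho)$ are given by $$\lambda_k(\rho)=\frac{1-\rho^2}{1-2\rho\cos[\mu_k(\rho)]+\rho^2},\qquad k=0,1,\dots,n-1,$$ or alternatively by $$\lambda_k(\rho)=(-1)^k\frac{\sin[n\mu_k(\rho)]}{\sin[\mu_k(\rho)]},\qquad k=0,1,\dots,n-1,$$ where the parameters $\mu_k(\rho)$ are as follows ("tur" = "the unique root"): $$\mu_0(\rho)=\begin{cases} ix_0(\rho),\ x_0(\rho)\text{ tur of } c_n^{(h)}(x)=\rho \text{ in }[0,+\infty), & \rho\ge1,\\ \text{tur of } c_n^{(t)}(\mu)=\rho\text{ in }[0,\gamma_0], & 1\ge\rho\ge0;\end{cases}$$ $$\mu_1(\rho)=\begin{cases} ix_1(\rho),\ x_1(\rho)\text{ tur of } s_n^{(h)}(x)=\rho \text{ in }[0,+\infty), & \rho\ge\xi_n,\\ \text{tur of } s_n^{(t)}(\mu)=\rho\text{ in }[0,\beta_1], & \xi_n\ge\rho\ge1,\\ \text{tur of } s_n^{(t)}(\mu)=\rho\text{ in }[\beta_1,\gamma_1], & 1\ge\rho\ge0;\end{cases}$$ for even $k=2,4,\dots,2\lceil n/2\rceil-2$: $$\mu_k(\rho)=\begin{cases}\text{tur of } c_n^{(t)}(\mu)=\rho\text{ in }(\alpha_k,\beta_k], & \rho\ge1,\\ \text{tur of } c_n^{(t)}(\mu)=\rho\text{ in }[\beta_k,\gamma_k],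 & 1\ge\rho\ge0;\end{cases}$$ for odd $k=3,5,\dots,2\lfloor n/2\rfloor-1$: $$\mu_k(\rho)=\begin{cases}\text{tur of } s_n^{(t)}(\mu)=\rho\text{ in }(\alpha_k,\beta_k], & \rho\ge1,\\ \text{tur of } s_n^{(t)}(\mu)=\rho\text{ in }[\beta_k,\gamma_k], & 1\ge\rho\ge0.\end{cases}$$ (In particular each of these equations has a unique root in the indicated interval.) Finally, for $\rho>0$ with $\rho\neq1$ and $\rho\neq\xi_n$, $\lambda_k$ is a type-1 eigenvalue when $k$ is odd and a type-2 eigenvalue when $k$ is even.
   Context: $K_n(\rho)=\left[\rho^{|j-k|}\right]_{j,k=1}^n$ (with $\rho^0=1$); $\xi_n=\frac{n+1}{n-1}$. Functions: $c_n^{(t)}(\mu)=\frac{\cos\frac{\mu(n+1)}{2}}{\cos\frac{\mu(n-1)}{2}}$, $s_n^{(t)}(\mu)=\frac{\sin\frac{\mu(n+1)}{2}}{\sin\frac{\mu(n-1)}{2}}$, $c_n^{(h)}(x)=\frac{\cosh\frac{x(n+1)}{2}}{\cosh\frac{x(n-1)}{2}}$, $s_n^{(h)}(x)=\frac{\sinh\frac{x(n+1)}{2}}{\sinh\frac{x(n-1)}{2}}$, with removable singularities at $0$ filled by continuity (so $s_n^{(t)}(0)=s_n^{(h)}(0)=\xi_n$). Numbers: $\alpha_k=\frac{(k-1)\pi}{n-1}$ ($k=1,\dots,n-1$), $\beta_k=\frac{k\pi}{n}$ ($k=0,\dots,n-1$), $\gamma_k=\frac{(k+1)\pi}{n+1}$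 ($k=0,\dots,n-1$). Where an eigenvalue formula is indeterminate (e.g. $\mu_k=0$), it is understood as the limit (so $\frac{\sin n\mu}{\sin\mu}$ at $\mu=0$ equals $n$). Types: let $p_{2n}(\rho,z)=z^{2n}+(1+\rho^2)\sum_{k=1}^{n-1}z^{2k}-2\rho\sum_{k=0}^{n-1}z^{2k+1}+1$, $s_{n+1}(\rho,z)=z^{n+1}-\rho z^n+\rho z-1$, $c_{n+1}(\rho,z)=z^{n+1}-\rho z^n-\rho z+1$. For $\rho\notin\{0,\pm1,\pm\xi_n\}$ the eigenvalues of $K_n(\rho)$ are the numbers $\frac{z(1-\rho^2)}{(z-\rho)(1-\rho z)}$ with $z$ a zero of $p_{2n}(\rho,\cdot)$, and each such zero satisfies exactly one of $s_{n+1}(\rho,z)=s_{n+1}(\rho,z^{-1})=0$ (type 1) or $c_{n+1}(\rho,z)=c_{n+1}(\rho,z^{-1})=0$ (type 2); an eigenvalue has the type of the zero(s) it arises from. *)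

theory Defs
  imports Complex_Main "Jordan_Normal_Form.Char_Poly"
begin

text \<open>The Kac-Murdock-Szego matrix K_n(rho), indices 0..n-1 (entries rho^|j-k|, with 0^0 = 1).\<close>
definition KMS :: "nat \<Rightarrow> real \<Rightarrow> real mat" where
  "KMS n \<rho> = mat n n (\<lambda>(j,k). \<rho> ^ nat \<bar>int j - int k\<bar>)"

definition xi :: "nat \<Rightarrow> real" where
  "xi n = (real n + 1) / (real n - 1)"

definition ct :: "nat \<Rightarrow> real \<Rightarrow> real" where
  "ct n \<mu> = cos (\<mu> * (real n + 1) / 2) / cos (\<mu> * (real n - 1) / 2)"

definition st :: "nat \<Rightarrow> real \<Rightarrow> real" where
  "st n \<mu> = (if \<mu> = 0 then xi n
              else sin (\<mu> * (real n + 1) / 2) / sin (\<mu> * (real n - 1) / 2))"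

definition ch :: "nat \<Rightarrow> real \<Rightarrow> real" where
  "ch n x = cosh (x * (real n + 1) / 2) / cosh (x * (real n - 1) / 2)"

definition sh :: "nat \<Rightarrow> real \<Rightarrow> real" where
  "sh n x = (if x = 0 then xi n
             else sinh (x * (real n + 1) / 2) / sinh (x * (real n - 1) / 2))"

definition alpha :: "nat \<Rightarrow> nat \<Rightarrow> real" where
  "alpha n k = (real k - 1) * pi / (real n - 1)"

definition beta :: "nat \<Rightarrow> nat \<Rightarrow> real" where
  "beta n k = real k * pi / real n"

definition gamma :: "nat \<Rightarrow> nat \<Rightarrow> real" where
  "gamma n k = (real k + 1) * pi / (real n + 1)"

definition tur :: "(real \<Rightarrow> bool) \<Rightarrow> real set \<Rightarrow> real" where
  "tur P S = (THE x. x \<in> S \<and> P x)"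

text \<open>The parameters mu_k(rho), as in the statement (at boundary values of rho
  the theorem asserts that both cases give the same value).\<close>
definition mu :: "nat \<Rightarrow> real \<Rightarrow> nat \<Rightarrow> complex" where
  "mu n \<rho> k =
    (if k = 0 then
       (if \<rho> \<ge> 1 then \<i> * complex_of_real (tur (\<lambda>x. ch n x = \<rho>) {0..})
        else complex_of_real (tur (\<lambda>m. ct n m = \<rho>) {0..gamma n 0}))
     else if k = 1 then
       (if \<rho> \<ge> xi n then \<i> * complex_of_real (tur (\<lambda>x. sh n x = \<rho>) {0..})
        else if \<rho> \<ge> 1 then complex_of_real (tur (\<lambda>m. st n m = \<rho>) {0..beta n 1})
        else complex_of_real (tur (\<lambda>m. st n m = \<rho>) {beta n 1..gamma n 1}))
     else if even k then
       (if \<rho> \<ge> 1 then complex_of_real (tur (\<lambda>m. ct n m = \<rho>) {alpha n k<..beta n k})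
        else complex_of_real (tur (\<lambda>m. ct n m = \<rho>) {beta n k..gamma n k}))
     else
       (if \<rho> \<ge> 1 then complex_of_real (tur (\<lambda>m. st n m = \<rho>) {alpha n k<..beta n k})
        else complex_of_real (tur (\<lambda>m. st n m = \<rho>) {beta n k..gamma n k})))"

definition lam_formula1 :: "real \<Rightarrow> complex \<Rightarrow> complex" where
  "lam_formula1 \<rho> \<mu> = (1 - complex_of_real \<rho> ^ 2) /
       (1 - 2 * complex_of_real \<rho> * cos \<mu> + complex_of_real \<rho> ^ 2)"

definition lam_formula1_denom :: "real \<Rightarrow> complex \<Rightarrow> complex" where
  "lam_formula1_denom \<rho> \<mu> = 1 - 2 * complex_of_real \<rho> * cos \<mu> + complex_of_real \<rho> ^ 2"

definition lam_formula2 :: "nat \<Rightarrow> nat \<Rightarrow> complex \<Rightarrow> complex" where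
  "lam_formula2 n k \<mu> = (-1) ^ k *
     (if \<mu> = 0 then of_nat n else sin (of_nat n * \<mu>) / sin \<mu>)"

definition lam :: "nat \<Rightarrow> real \<Rightarrow> nat \<Rightarrow> complex" where
  "lam n \<rho> k = lam_formula2 n k (mu n \<rho> k)"

definition p2n :: "nat \<Rightarrow> real \<Rightarrow> complex \<Rightarrow> complex" where
  "p2n n \<rho> z = z ^ (2*n) + (1 + complex_of_real \<rho> ^ 2) * (\<Sum>k\<in>{1..n-1}. z ^ (2*k))
      - 2 * complex_of_real \<rho> * (\<Sum>k\<in>{0..n-1}. z ^ (2*k+1)) + 1"

definition s_pol :: "nat \<Rightarrow> real \<Rightarrow> complex \<Rightarrow> complex" where
  "s_pol n \<rho> z = z ^ (n+1) - complex_of_real \<rho> * z ^ n + complex_of_real \<rho> * z - 1"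

definition c_pol :: "nat \<Rightarrow> real \<Rightarrow> complex \<Rightarrow> complex" where
  "c_pol n \<rho> z = z ^ (n+1) - complex_of_real \<rho> * z ^ n - complex_of_real \<rho> * z + 1"

definition eig_of_zero :: "real \<Rightarrow> complex \<Rightarrow> complex" where
  "eig_of_zero \<rho> z = z * (1 - complex_of_real \<rho> ^ 2) /
     ((z - complex_of_real \<rho>) * (1 - complex_of_real \<rho> * z))"

text \<open>An eigenvalue has the type of the zero(s) of p_{2n} it arises from.\<close>
definition eig_type1 :: "nat \<Rightarrow> real \<Rightarrow> complex \<Rightarrow> bool" where
  "eig_type1 n \<rho> l \<longleftrightarrow>
     (\<exists>z. p2n n \<rho> z = 0 \<and> eig_of_zero \<rho> z = l) \<and>
     (\<forall>z. p2n n \<rho> z = 0 \<and> eig_of_zero \<rho> z = l \<longrightarrow>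
          s_pol n \<rho> z = 0 \<and> s_pol n \<rho> (inverse z) = 0)"

definition eig_type2 :: "nat \<Rightarrow> real \<Rightarrow> complex \<Rightarrow> bool" where
  "eig_type2 n \<rho> l \<longleftrightarrow>
     (\<exists>z. p2n n \<rho> z = 0 \<and> eig_of_zero \<rho> z = l) \<and>
     (\<forall>z. p2n n \<rho> z = 0 \<and> eig_of_zero \<rho> z = l \<longrightarrow>
          c_pol n \<rho> z = 0 \<and> c_pol n \<rho> (inverse z) = 0)"

end

theory Submission
  imports Defs "HOL-Analysis.Analysis"
begin


lemma alg1: "\<lbrakk>d + e = 2*c*b; e = r*b\<rbrakk> \<Longrightarrow> (1-2*r*c+r^2)*b = b - r*d" for b c d e r :: complex
  by (Groebner_Basis.algebra)

lemma alg2: "\<lbrakk>d + e = 2*c*b; d = r*b\<rbrakk> \<Longrightarrow> (1-2*r*c+r^2)*b = b - r*e" for b c d e r :: complex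
  by (Groebner_Basis.algebra)

lemma L_sum:
  fixes w :: "int \<Rightarrow> complex" and c r :: complex
  assumes rec: "\<And>j. w (j - 1) + w (j + 1) = 2 * c * w j"
    and bl: "w (-1) = r * w 0"
  shows "(1 - 2*r*c + r^2) * (\<Sum>i\<le>j. r^(j-i) * w (int i)) = w (int j) - r * w (int j + 1)"
proof (induction j)
  case 0
  have "w (-1) + w 1 = 2*c*w 0" using rec[of 0] by simp
  then have "(1-2*r*c+r^2)*w 0 = w 0 - r * w 1" using bl by (rule alg2)
  then show ?case by simp
next
  case (Suc j)
  have s: "(\<Sum>i\<le>Suc j. r^(Suc j-i) * w (int i)) = r * (\<Sum>i\<le>j. r^(j-i) * w (int i)) + w (int (Suc j))"
    by (simp add: sum_distrib_left Suc_diff_le mult.assoc)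
  have "w (int j) + w (int j + 2) = 2*c*w(int j + 1)" using rec[of "int j + 1"] by (simp add: add.assoc)
  then have e: "w (int j + 2) = 2*c*w(int j + 1) - w (int j)" by (simp add: algebra_simps)
  have i1: "int (Suc j) = int j + 1" "int (Suc j) + 1 = int j + 2" by simp_all
  have i3: "int j + 1 + 1 = int j + 2" by simp
  show ?case unfolding s i1(1) i3 using Suc.IH e
    by (Groebner_Basis.algebra)
qed

lemma R_sum:
  fixes w :: "int \<Rightarrow> complex" and c r :: complex
  assumes rec: "\<And>j. w (j - 1) + w (j + 1) = 2 * c * w j"
    and br: "w (int n) = r * w (int n - 1)"
    and j: "j < n"
  shows "(1 - 2*r*c + r^2) * (\<Sum>i\<in>{j..<n}. r^(i-j) * w (int i)) = w (int j) - r * w (int j - 1)"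
proof -
  have "j \<le> n - 1" using j by simp
  then show ?thesis
  proof (induction j rule: inc_induct)
    case base
    have n1: "int (n - 1) = int n - 1" using j by simp
    have "{n - 1..<n} = {n-1}" using j by auto
    then have s: "(\<Sum>i\<in>{n-1..<n}. r^(i-(n-1)) * w (int i)) = w (int n - 1)" using n1 by simp
    have "w (int n - 1 - 1) + w (int n) = 2 * c * w (int n - 1)" using rec[of "int n - 1"] by simp
    then show ?case unfolding s n1 using br by (rule alg1)
  next
    case (step m)
    have m: "Suc m < n" using step by simp
    have s: "(\<Sum>i\<in>{m..<n}. r^(i-m) * w (int i)) = w (int m) + r * (\<Sum>i\<in>{Suc m..<n}. r^(i - Suc m) * w (int i))"
    proof -
      have "(\<Sum>i\<in>{m..<n}. r^(i-m) * w (int i)) = w (int m) + (\<Sum>i\<in>{Suc m..<n}. r^(i-m) * w (int i))"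
        using m by (subst sum.atLeast_Suc_lessThan) auto
      also have "(\<Sum>i\<in>{Suc m..<n}. r^(i-m) * w (int i)) = r * (\<Sum>i\<in>{Suc m..<n}. r^(i - Suc m) * w (int i))"
        unfolding sum_distrib_left
        by (rule sum.cong) (auto simp: power_Suc[symmetric] Suc_diff_Suc mult.assoc)
      finally show ?thesis .
    qed
    have e: "w (int m - 1) + w (int m + 1) = 2 * c * w (int m)" using rec[of "int m"] by simp
    have IH: "(1 - 2*r*c + r^2) * (\<Sum>i\<in>{Suc m..<n}. r^(i - Suc m) * w (int i)) = w (int m + 1) - r * w (int m)"
      using step.IH by (simp add: add.commute)
    show ?case unfolding s using IH e
      by (Groebner_Basis.algebra)
  qed
qed

lemma S_sum:
  fixes w :: "int \<Rightarrow> complex" and c r :: complex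
  assumes rec: "\<And>j. w (j - 1) + w (j + 1) = 2 * c * w j"
    and bl: "w (-1) = r * w 0"
    and br: "w (int n) = r * w (int n - 1)"
    and j: "j < n"
  shows "(1 - 2*r*c + r^2) * (\<Sum>i<n. r^(nat \<bar>int i - int j\<bar>) * w (int i)) = (1 - r^2) * w (int j)"
proof -
  have split: "{..<n} = {..j} \<union> {Suc j..<n}" using j by auto
  have "(\<Sum>i<n. r^(nat \<bar>int i - int j\<bar>) * w (int i))
      = (\<Sum>i\<le>j. r^(nat \<bar>int i - int j\<bar>) * w (int i)) + (\<Sum>i\<in>{Suc j..<n}. r^(nat \<bar>int i - int j\<bar>) * w (int i))"
    unfolding split by (rule sum.union_disjoint) auto
  also have "(\<Sum>i\<le>j. r^(nat \<bar>int i - int j\<bar>) * w (int i)) = (\<Sum>i\<le>j. r^(j-i) * w (int i))"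
  proof (rule sum.cong)
    fix i assume "i \<in> {..j}"
    then have "nat \<bar>int i - int j\<bar> = j - i" by auto
    then show "r^(nat \<bar>int i - int j\<bar>) * w (int i) = r^(j-i) * w (int i)" by (simp only:)
  qed simp
  also have "(\<Sum>i\<in>{Suc j..<n}. r^(nat \<bar>int i - int j\<bar>) * w (int i)) = (\<Sum>i\<in>{j..<n}. r^(i-j) * w (int i)) - w (int j)"
  proof -
    have "(\<Sum>i\<in>{j..<n}. r^(i-j) * w (int i)) = w (int j) + (\<Sum>i\<in>{Suc j..<n}. r^(i-j) * w (int i))"
      using j by (subst sum.atLeast_Suc_lessThan) auto
    moreover have "(\<Sum>i\<in>{Suc j..<n}. r^(nat \<bar>int i - int j\<bar>) * w (int i)) = (\<Sum>i\<in>{Suc j..<n}. r^(i-j) * w (int i))"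
    proof (rule sum.cong)
      fix i assume "i \<in> {Suc j..<n}"
      then have "nat \<bar>int i - int j\<bar> = i - j" by auto
      then show "r^(nat \<bar>int i - int j\<bar>) * w (int i) = r^(i-j) * w (int i)" by (simp only:)
    qed simp
    ultimately show ?thesis by simp
  qed
  finally have eq: "(\<Sum>i<n. r^(nat \<bar>int i - int j\<bar>) * w (int i)) = (\<Sum>i\<le>j. r^(j-i) * w (int i)) + ((\<Sum>i\<in>{j..<n}. r^(i-j) * w (int i)) - w (int j))" .
  have L: "(1 - 2*r*c + r^2) * (\<Sum>i\<le>j. r^(j-i) * w (int i)) = w (int j) - r * w (int j + 1)"
    by (rule L_sum[OF rec bl])
  have R: "(1 - 2*r*c + r^2) * (\<Sum>i\<in>{j..<n}. r^(i-j) * w (int i)) = w (int j) - r * w (int j - 1)"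
    by (rule R_sum[OF rec br j])
  have rj: "w (int j - 1) + w (int j + 1) = 2 * c * w (int j)" by (rule rec)
  show ?thesis unfolding eq using L R rj
    by (Groebner_Basis.algebra)
qed


lemma KMS_carrier: "map_mat complex_of_real (KMS n \<rho>) \<in> carrier_mat n n"
  by (simp add: KMS_def)

lemma KMS_index: "i < n \<Longrightarrow> j < n \<Longrightarrow> map_mat complex_of_real (KMS n \<rho>) $$ (i, j) = complex_of_real \<rho> ^ nat \<bar>int j - int i\<bar>"
  by (simp add: KMS_def abs_minus_commute)

lemma KMS_index_real: "i < n \<Longrightarrow> j < n \<Longrightarrow> KMS n \<rho> $$ (i, j) = \<rho> ^ nat \<bar>int i - int j\<bar>"
  by (simp add: KMS_def)

lemma eigen_from_w:
  fixes w :: "int \<Rightarrow> complex" and c :: complex and \<rho> :: real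
  assumes rec: "\<And>j. w (j - 1) + w (j + 1) = 2 * c * w j"
    and bl: "w (-1) = of_real \<rho> * w 0" and br: "w (int n) = of_real \<rho> * w (int n - 1)"
    and w0: "w 0 \<noteq> 0" and n: "n \<ge> 1" and \<rho>: "\<rho> \<ge> 0" "\<rho> \<noteq> 1"
  shows "1 - 2* of_real \<rho>*c + (of_real \<rho>)^2 \<noteq> 0 \<and>
    eigenvalue (map_mat complex_of_real (KMS n \<rho>)) ((1 - (of_real \<rho>)^2) / (1 - 2* of_real \<rho>*c + (of_real \<rho>)^2))"
proof -
  define r :: complex where "r = of_real \<rho>"
  define t where "t = 1 - 2*r*c + r^2"
  have S: "\<And>j. j < n \<Longrightarrow> t * (\<Sum>i<n. r^(nat \<bar>int i - int j\<bar>) * w (int i)) = (1 - r^2) * w (int j)"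
    unfolding t_def by (rule S_sum[OF rec bl[folded r_def] br[folded r_def]])
  have r2: "1 - r^2 \<noteq> 0"
  proof
    assume "1 - r^2 = 0"
    then have "complex_of_real (1 - \<rho>^2) = 0" unfolding r_def by (simp add: of_real_power)
    then have "\<rho>^2 = 1" by (simp only: of_real_eq_0_iff)
    with \<rho> show False by (simp add: power2_eq_1_iff)
  qed
  have t0: "t \<noteq> 0"
  proof
    assume "t = 0"
    with S[of 0] n have "(1 - r^2) * w 0 = 0" by simp
    with r2 w0 show False by simp
  qed
  define v where "v = Matrix.vec n (\<lambda>i. w (int i))"
  have v: "v \<in> carrier_vec n" unfolding v_def by simp
  have vne: "v \<noteq> 0\<^sub>v n"
  proof
    assume "v = 0\<^sub>v n"
    then have "v $ 0 = 0" using n by simp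
    then show False using w0 n unfolding v_def by simp
  qed
  have Av: "map_mat complex_of_real (KMS n \<rho>) *\<^sub>v v = ((1 - r^2) / t) \<cdot>\<^sub>v v"
  proof (rule eq_vecI)
    fix j assume "j < dim_vec (((1 - r^2) / t) \<cdot>\<^sub>v v)"
    then have j: "j < n" using v by simp
    have "(map_mat complex_of_real (KMS n \<rho>) *\<^sub>v v) $ j = (\<Sum>i<n. r^(nat \<bar>int i - int j\<bar>) * w (int i))"
      using j KMS_carrier[of n \<rho>]
      by (auto simp: scalar_prod_def v_def KMS_index_real r_def lessThan_atLeast0 of_real_power abs_minus_commute intro!: sum.cong)
    also have "\<dots> = (1 - r^2) / t * w (int j)" using S[OF j] t0 by (simp add: field_simps)
    finally show "(map_mat complex_of_real (KMS n \<rho>) *\<^sub>v v) $ j = (((1 - r^2) / t) \<cdot>\<^sub>v v) $ j"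
      using j v by (simp add: v_def)
  qed (use v KMS_carrier[of n \<rho>] in simp)
  have "eigenvector (map_mat complex_of_real (KMS n \<rho>)) v ((1 - r^2) / t)"
    unfolding eigenvector_def using v vne Av KMS_carrier[of n \<rho>] by simp
  then show ?thesis using t0 unfolding eigenvalue_def t_def r_def by blast
qed


lemma cos_rec_c: "cos ((of_int (j - 1) - h) * \<mu>) + cos ((of_int (j + 1) - h) * \<mu>) = 2 * cos \<mu> * cos ((of_int j - h) * \<mu>)"
  for \<mu> h :: complex
proof -
  have a: "(of_int (j - 1) - h) * \<mu> = (of_int j - h) * \<mu> - \<mu>" "(of_int (j + 1) - h) * \<mu> = (of_int j - h) * \<mu> + \<mu>"
    by (simp_all add: algebra_simps)
  show ?thesis unfolding a cos_add cos_diff by (simp add: algebra_simps)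
qed

lemma sin_rec_c: "sin ((of_int (j - 1) - h) * \<mu>) + sin ((of_int (j + 1) - h) * \<mu>) = 2 * cos \<mu> * sin ((of_int j - h) * \<mu>)"
  for \<mu> h :: complex
proof -
  have a: "(of_int (j - 1) - h) * \<mu> = (of_int j - h) * \<mu> - \<mu>" "(of_int (j + 1) - h) * \<mu> = (of_int j - h) * \<mu> + \<mu>"
    by (simp_all add: algebra_simps)
  show ?thesis unfolding a sin_add sin_diff by (simp add: algebra_simps)
qed

lemma eig_cos:
  fixes \<mu> :: complex
  assumes cond: "cos (\<mu> * (of_nat n + 1) / 2) = of_real \<rho> * cos (\<mu> * (of_nat n - 1) / 2)"
    and nz: "cos (\<mu> * (of_nat n - 1) / 2) \<noteq> 0"
    and n: "n \<ge> 1" and \<rho>: "\<rho> \<ge> 0" "\<rho> \<noteq> 1"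
  shows "lam_formula1_denom \<rho> \<mu> \<noteq> 0 \<and> eigenvalue (map_mat complex_of_real (KMS n \<rho>)) (lam_formula1 \<rho> \<mu>)"
proof -
  define h :: complex where "h = (of_nat n - 1) / 2"
  define w where "w = (\<lambda>j::int. cos ((of_int j - h) * \<mu>))"
  have rec: "\<And>j. w (j - 1) + w (j + 1) = 2 * cos \<mu> * w j" unfolding w_def by (rule cos_rec_c)
  have e1: "(of_int (-1) - h) * \<mu> = - (\<mu> * (of_nat n + 1) / 2)" unfolding h_def by (simp add: field_simps)
  have e2: "(of_int 0 - h) * \<mu> = - (\<mu> * (of_nat n - 1) / 2)" unfolding h_def by (simp add: field_simps)
  have e3: "(of_int (int n) - h) * \<mu> = \<mu> * (of_nat n + 1) / 2" unfolding h_def by (simp add: field_simps)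
  have e4: "(of_int (int n - 1) - h) * \<mu> = \<mu> * (of_nat n - 1) / 2" unfolding h_def by (simp add: field_simps)
  have bl: "w (-1) = of_real \<rho> * w 0" unfolding w_def e1 e2 cos_minus using cond by simp
  have br: "w (int n) = of_real \<rho> * w (int n - 1)" unfolding w_def e3 e4 using cond by simp
  have w0: "w 0 \<noteq> 0" unfolding w_def e2 using nz by simp
  from eigen_from_w[OF rec bl br w0 n \<rho>] show ?thesis
    unfolding lam_formula1_def lam_formula1_denom_def by simp
qed

lemma eig_sin:
  fixes \<mu> :: complex
  assumes cond: "sin (\<mu> * (of_nat n + 1) / 2) = of_real \<rho> * sin (\<mu> * (of_nat n - 1) / 2)"
    and nz: "sin (\<mu> * (of_nat n - 1) / 2) \<noteq> 0"
    and n: "n \<ge> 1" and \<rho>: "\<rho> \<ge> 0" "\<rho> \<noteq> 1"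
  shows "lam_formula1_denom \<rho> \<mu> \<noteq> 0 \<and> eigenvalue (map_mat complex_of_real (KMS n \<rho>)) (lam_formula1 \<rho> \<mu>)"
proof -
  define h :: complex where "h = (of_nat n - 1) / 2"
  define w where "w = (\<lambda>j::int. sin ((of_int j - h) * \<mu>))"
  have rec: "\<And>j. w (j - 1) + w (j + 1) = 2 * cos \<mu> * w j" unfolding w_def by (rule sin_rec_c)
  have e1: "(of_int (-1) - h) * \<mu> = - (\<mu> * (of_nat n + 1) / 2)" unfolding h_def by (simp add: field_simps)
  have e2: "(of_int 0 - h) * \<mu> = - (\<mu> * (of_nat n - 1) / 2)" unfolding h_def by (simp add: field_simps)
  have e3: "(of_int (int n) - h) * \<mu> = \<mu> * (of_nat n + 1) / 2" unfolding h_def by (simp add: field_simps)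
  have e4: "(of_int (int n - 1) - h) * \<mu> = \<mu> * (of_nat n - 1) / 2" unfolding h_def by (simp add: field_simps)
  have bl: "w (-1) = of_real \<rho> * w 0" unfolding w_def e1 e2 sin_minus using cond by simp
  have br: "w (int n) = of_real \<rho> * w (int n - 1)" unfolding w_def e3 e4 using cond by simp
  have w0: "w 0 \<noteq> 0" unfolding w_def e2 using nz by simp
  from eigen_from_w[OF rec bl br w0 n \<rho>] show ?thesis
    unfolding lam_formula1_def lam_formula1_denom_def by simp
qed

lemma xi_gt1: "n \<ge> 2 \<Longrightarrow> xi n > 1"
  by (simp add: xi_def field_simps)

lemma eig_lin:
  assumes n: "n \<ge> 2"
  shows "lam_formula1_denom (xi n) 0 \<noteq> 0 \<and> eigenvalue (map_mat complex_of_real (KMS n (xi n))) (lam_formula1 (xi n) 0)"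
proof -
  define h :: complex where "h = (of_nat n - 1) / 2"
  define w where "w = (\<lambda>j::int. of_int j - h)"
  have rec: "\<And>j. w (j - 1) + w (j + 1) = 2 * 1 * w j" unfolding w_def by (simp add: algebra_simps)
  have xc: "complex_of_real (xi n) = (of_nat n + 1) / (of_nat n - 1)"
    unfolding xi_def by simp
  have nn: "(of_nat n :: complex) - 1 \<noteq> 0"
  proof
    assume "(of_nat n :: complex) - 1 = 0"
    then have "(of_nat n :: complex) = of_nat 1" by simp
    then have "n = 1" by (simp only: of_nat_eq_iff)
    with n show False by simp
  qed
  have bl: "w (-1) = of_real (xi n) * w 0" unfolding w_def h_def xc using nn by (simp add: field_simps)
  have br: "w (int n) = of_real (xi n) * w (int n - 1)" unfolding w_def h_def xc using nn by (simp add: field_simps)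
  have w0: "w 0 \<noteq> 0" unfolding w_def h_def using nn by simp
  have \<rho>: "xi n \<ge> 0" "xi n \<noteq> 1" using xi_gt1[OF n] by auto
  from eigen_from_w[OF rec bl br w0 _ \<rho>] n show ?thesis
    unfolding lam_formula1_def lam_formula1_denom_def by simp
qed


lemma alg_cos:
  fixes ca sa cb sb r :: complex
  assumes "sa^2 + ca^2 = 1" "sb^2 + cb^2 = 1" "ca = r * cb"
  shows "(1 - 2 * r * (ca * cb + sa * sb) + r^2) * cb^2 = (sa * cb - ca * sb)^2"
    and "(1 - r^2) * cb^2 = (sa * cb + ca * sb) * (sa * cb - ca * sb)"
  using assms by (Groebner_Basis.algebra)+

lemma alg_sin:
  fixes ca sa cb sb r :: complex
  assumes "sa^2 + ca^2 = 1" "sb^2 + cb^2 = 1" "sa = r * sb"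
  shows "(1 - 2 * r * (ca * cb + sa * sb) + r^2) * sb^2 = (sa * cb - ca * sb)^2"
    and "(1 - r^2) * sb^2 = - ((sa * cb + ca * sb) * (sa * cb - ca * sb))"
  using assms by (Groebner_Basis.algebra)+

lemma ab_facts:
  fixes \<mu> :: complex
  shows "\<mu> = \<mu> * (of_nat n + 1) / 2 - \<mu> * (of_nat n - 1) / 2"
    and "of_nat n * \<mu> = \<mu> * (of_nat n + 1) / 2 + \<mu> * (of_nat n - 1) / 2"
  by (simp_all add: field_simps)

lemma formula_cos:
  fixes \<mu> :: complex
  assumes cond: "cos (\<mu> * (of_nat n + 1) / 2) = of_real \<rho> * cos (\<mu> * (of_nat n - 1) / 2)"
    and nz: "cos (\<mu> * (of_nat n - 1) / 2) \<noteq> 0" and s: "sin \<mu> \<noteq> 0" and k: "even k"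
  shows "lam_formula1_denom \<rho> \<mu> \<noteq> 0 \<and> lam_formula2 n k \<mu> = lam_formula1 \<rho> \<mu>"
proof -
  define a where "a = \<mu> * (of_nat n + 1) / 2"
  define b where "b = \<mu> * (of_nat n - 1) / 2"
  have m: "\<mu> = a - b" and nm: "of_nat n * \<mu> = a + b" unfolding a_def b_def by (rule ab_facts)+
  have cm: "cos \<mu> = cos a * cos b + sin a * sin b" unfolding m by (rule cos_diff)
  have sm: "sin \<mu> = sin a * cos b - cos a * sin b" unfolding m by (rule sin_diff)
  have snm: "sin (of_nat n * \<mu>) = sin a * cos b + cos a * sin b" unfolding nm by (rule sin_add)
  note A = alg_cos[of "sin a" "cos a" "sin b" "cos b" "of_real \<rho>", OF sin_cos_squared_add sin_cos_squared_add cond[folded a_def b_def]]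
  have D: "lam_formula1_denom \<rho> \<mu> * (cos b)^2 = (sin \<mu>)^2"
    unfolding lam_formula1_denom_def cm sm using A(1) by simp
  have N: "(1 - (of_real \<rho>)^2) * (cos b)^2 = sin (of_nat n * \<mu>) * sin \<mu>"
    unfolding snm sm using A(2) by simp
  have cb: "cos b \<noteq> 0" using nz unfolding b_def .
  have d0: "lam_formula1_denom \<rho> \<mu> \<noteq> 0" using D s cb by auto
  have m0: "\<mu> \<noteq> 0" using s by auto
  have "lam_formula1 \<rho> \<mu> = ((1 - (of_real \<rho>)^2) * (cos b)^2) / (lam_formula1_denom \<rho> \<mu> * (cos b)^2)"
    unfolding lam_formula1_def lam_formula1_denom_def using cb by simp
  also have "\<dots> = sin (of_nat n * \<mu>) / sin \<mu>" unfolding D N using s by (simp add: power2_eq_square)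
  finally show ?thesis using d0 m0 k unfolding lam_formula2_def by simp
qed

lemma formula_sin:
  fixes \<mu> :: complex
  assumes cond: "sin (\<mu> * (of_nat n + 1) / 2) = of_real \<rho> * sin (\<mu> * (of_nat n - 1) / 2)"
    and nz: "sin (\<mu> * (of_nat n - 1) / 2) \<noteq> 0" and s: "sin \<mu> \<noteq> 0" and k: "odd k"
  shows "lam_formula1_denom \<rho> \<mu> \<noteq> 0 \<and> lam_formula2 n k \<mu> = lam_formula1 \<rho> \<mu>"
proof -
  define a where "a = \<mu> * (of_nat n + 1) / 2"
  define b where "b = \<mu> * (of_nat n - 1) / 2"
  have m: "\<mu> = a - b" and nm: "of_nat n * \<mu> = a + b" unfolding a_def b_def by (rule ab_facts)+
  have cm: "cos \<mu> = cos a * cos b + sin a * sin b" unfolding m by (rule cos_diff)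
  have sm: "sin \<mu> = sin a * cos b - cos a * sin b" unfolding m by (rule sin_diff)
  have snm: "sin (of_nat n * \<mu>) = sin a * cos b + cos a * sin b" unfolding nm by (rule sin_add)
  note A = alg_sin[of "sin a" "cos a" "sin b" "cos b" "of_real \<rho>", OF sin_cos_squared_add sin_cos_squared_add cond[folded a_def b_def]]
  have D: "lam_formula1_denom \<rho> \<mu> * (sin b)^2 = (sin \<mu>)^2"
    unfolding lam_formula1_denom_def cm sm using A(1) by simp
  have N: "(1 - (of_real \<rho>)^2) * (sin b)^2 = - (sin (of_nat n * \<mu>) * sin \<mu>)"
    unfolding snm sm using A(2) by simp
  have cb: "sin b \<noteq> 0" using nz unfolding b_def .
  have d0: "lam_formula1_denom \<rho> \<mu> \<noteq> 0" using D s cb by auto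
  have m0: "\<mu> \<noteq> 0" using s by auto
  have "lam_formula1 \<rho> \<mu> = ((1 - (of_real \<rho>)^2) * (sin b)^2) / (lam_formula1_denom \<rho> \<mu> * (sin b)^2)"
    unfolding lam_formula1_def lam_formula1_denom_def using cb by simp
  also have "\<dots> = - (sin (of_nat n * \<mu>) / sin \<mu>)" unfolding D N using s by (simp add: power2_eq_square)
  finally show ?thesis using d0 m0 k unfolding lam_formula2_def by simp
qed

lemma formula_lin:
  assumes n: "n \<ge> 2"
  shows "lam_formula1_denom (xi n) 0 \<noteq> 0 \<and> lam_formula2 n 1 0 = lam_formula1 (xi n) 0"
proof -
  have nn: "real n - 1 \<noteq> 0" using n by simp
  have d: "lam_formula1_denom (xi n) 0 = of_real ((1 - xi n)^2)"
    unfolding lam_formula1_denom_def by (simp add: power2_eq_square algebra_simps)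
  have x1: "1 - xi n \<noteq> 0" using xi_gt1[OF n] by simp
  have "lam_formula1 (xi n) 0 = of_real ((1 - (xi n)^2) / (1 - xi n)^2)"
    unfolding lam_formula1_def by (simp add: power2_eq_square algebra_simps)
  also have "(1 - (xi n)^2) / (1 - xi n)^2 = ((1 + xi n) * (1 - xi n)) / ((1 - xi n) * (1 - xi n))"
    by (simp add: power2_eq_square algebra_simps)
  also have "\<dots> = (1 + xi n) / (1 - xi n)" using x1 by simp
  also have "\<dots> = - real n" unfolding xi_def using nn by (simp add: field_simps)
  finally show ?thesis using d x1 unfolding lam_formula2_def by simp
qed


definition uu :: "nat \<Rightarrow> nat \<Rightarrow> real \<Rightarrow> real" where
  "uu n k m = m * (real n - 1) / 2 - real k * pi / 2"
definition vv :: "nat \<Rightarrow> nat \<Rightarrow> real \<Rightarrow> real" where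
  "vv n k m = m * (real n + 1) / 2 - real k * pi / 2"
definition Fk :: "nat \<Rightarrow> nat \<Rightarrow> real \<Rightarrow> real" where
  "Fk n k m = (if even k then ct n m else st n m)"
definition trigk :: "nat \<Rightarrow> real \<Rightarrow> real" where
  "trigk k x = (if even k then cos x else sin x)"

lemma cos_minus_npi: "cos (x - real q * pi) = (-1)^q * cos x"
  by (simp add: cos_diff)

lemma sq_m1_aux: "(-1::real)^q * ((-1)^q * y) = y"
  by (simp add: mult.assoc[symmetric] power_mult_distrib[symmetric])

lemma trigk_parity: "trigk k x = (-1)^(k div 2) * cos (x - real k * pi / 2)"
proof (cases "even k")
  case True
  then obtain q where k: "k = 2 * q" by blast
  have e: "x - real k * pi / 2 = x - real q * pi" unfolding k by simp
  have kd: "k div 2 = q" unfolding k by simp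
  show ?thesis using True unfolding trigk_def e cos_minus_npi kd
    by (simp add: sq_m1_aux)
next
  case False
  then obtain q where k: "k = 2 * q + 1" using oddE by blast
  have e: "x - real k * pi / 2 = (x - pi / 2) - real q * pi" unfolding k by (simp add: field_simps)
  have kd: "k div 2 = q" unfolding k by simp
  have cs: "cos (x - pi / 2) = sin x" by (simp add: cos_diff)
  show ?thesis using False unfolding trigk_def e cos_minus_npi kd cs
    by (simp add: sq_m1_aux)
qed

lemma sq_m1: "(-1::real)^q * (-1)^q = 1"
  by (simp add: power_mult_distrib[symmetric])

lemma band:
  assumes n: "n \<ge> 2" and k: "k < n" and m: "alpha n k < m" "m \<le> gamma n k" "0 \<le> m"
  shows "-(pi/2) < uu n k m" "uu n k m < pi/2" "-(pi/2) < vv n k m" "vv n k m \<le> pi/2"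
proof -
  have n1: "real n - 1 > 0" using n by simp
  have a: "(real k - 1) * pi < m * (real n - 1)"
    using m(1) n1 unfolding alpha_def by (simp add: field_simps)
  have g: "m * (real n + 1) \<le> (real k + 1) * pi"
    using m(2) unfolding gamma_def by (simp add: field_simps)
  have mm: "m * (real n - 1) \<le> m * (real n + 1)" using m(3) by (simp add: mult_left_mono)
  show "-(pi/2) < uu n k m" using a unfolding uu_def by (simp add: field_simps)
  have "m * (real n - 1) < (real k + 1) * pi"
  proof (cases "m = 0")
    case True then show ?thesis by simp
  next
    case False
    then have "m * (real n - 1) < m * (real n + 1)" using m(3) by simp
    then show ?thesis using g by simp
  qed
  then show "uu n k m < pi/2" unfolding uu_def by (simp add: field_simps)
  show "-(pi/2) < vv n k m" using a mm unfolding vv_def by (simp add: field_simps)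
  show "vv n k m \<le> pi/2" using g unfolding vv_def by (simp add: field_simps)
qed

lemma alpha_nonneg: "k \<ge> 1 \<Longrightarrow> n \<ge> 2 \<Longrightarrow> alpha n k \<ge> 0"
  unfolding alpha_def by simp

lemma Fk_band:
  assumes n: "n \<ge> 2" and k: "k < n" and m: "alpha n k < m" "m \<le> gamma n k" "0 \<le> m"
  shows "trigk k (m * (real n - 1) / 2) \<noteq> 0"
    and "Fk n k m = cos (vv n k m) / cos (uu n k m)"
    and "cos (uu n k m) > 0"
    and "odd k \<Longrightarrow> m \<noteq> 0"
proof -
  note b = band[OF n k m]
  have cu: "cos (uu n k m) > 0" using b by (intro cos_gt_zero_pi) auto
  then show "cos (uu n k m) > 0" .
  have tb: "trigk k (m * (real n - 1) / 2) = (-1)^(k div 2) * cos (uu n k m)"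
    unfolding trigk_parity uu_def ..
  have ta: "trigk k (m * (real n + 1) / 2) = (-1)^(k div 2) * cos (vv n k m)"
    unfolding trigk_parity vv_def ..
  show "trigk k (m * (real n - 1) / 2) \<noteq> 0" unfolding tb using cu by simp
  show m0: "odd k \<Longrightarrow> m \<noteq> 0"
  proof -
    assume "odd k"
    then have "k \<ge> 1" by (cases k) auto
    then show "m \<noteq> 0" using alpha_nonneg[OF _ n] m(1) by fastforce
  qed
  have "Fk n k m = trigk k (m * (real n + 1) / 2) / trigk k (m * (real n - 1) / 2)"
    unfolding Fk_def trigk_def ct_def st_def using m0 by auto
  also have "\<dots> = cos (vv n k m) / cos (uu n k m)"
    unfolding ta tb by (simp add: sq_m1)
  finally show "Fk n k m = cos (vv n k m) / cos (uu n k m)" .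
qed


lemma alpha_lt_beta: "n \<ge> 2 \<Longrightarrow> k < n \<Longrightarrow> alpha n k < beta n k"
  unfolding alpha_def beta_def by (simp add: field_simps)

lemma beta_le_gamma: "n \<ge> 2 \<Longrightarrow> k < n \<Longrightarrow> beta n k \<le> gamma n k"
  unfolding gamma_def beta_def by (simp add: field_simps)

lemma beta_nonneg: "beta n k \<ge> 0"
  unfolding beta_def by simp

lemma gamma_lt_pi: "n \<ge> 2 \<Longrightarrow> k < n \<Longrightarrow> gamma n k < pi"
  unfolding gamma_def by (simp add: field_simps)

lemma beta_lt_pi: "n \<ge> 2 \<Longrightarrow> k < n \<Longrightarrow> beta n k < pi"
  unfolding beta_def by (simp add: field_simps)

lemma uu_beta: "n \<ge> 2 \<Longrightarrow> uu n k (beta n k) = - (real k * pi / (2 * real n))"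
  unfolding uu_def beta_def by (simp add: field_simps)

lemma vv_beta: "n \<ge> 2 \<Longrightarrow> vv n k (beta n k) = real k * pi / (2 * real n)"
  unfolding vv_def beta_def by (simp add: field_simps)

lemma vv_gamma: "n \<ge> 2 \<Longrightarrow> vv n k (gamma n k) = pi / 2"
  unfolding vv_def gamma_def by (simp add: field_simps)

lemma uu_alpha: "n \<ge> 2 \<Longrightarrow> uu n k (alpha n k) = - (pi / 2)"
  unfolding uu_def alpha_def by (simp add: field_simps)

lemma vv_alpha: "n \<ge> 2 \<Longrightarrow> vv n k (alpha n k) = alpha n k - pi / 2"
  unfolding vv_def alpha_def by (simp add: field_simps)

lemma cont_G: "continuous_on S (\<lambda>m. \<rho> * cos (uu n k m) - cos (vv n k m))"
  unfolding uu_def vv_def by (intro continuous_intros) auto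

lemma cos_beta_half: "n \<ge> 2 \<Longrightarrow> k < n \<Longrightarrow> cos (real k * pi / (2 * real n)) \<ge> 0"
proof (rule cos_ge_zero)
  assume n: "n \<ge> 2" and k: "k < n"
  show "- (pi / 2) \<le> real k * pi / (2 * real n)"
    by (rule order_trans[of _ 0]) auto
  have "real k * pi \<le> real n * pi" using k by simp
  then show "real k * pi / (2 * real n) \<le> pi / 2" using n by (simp add: field_simps)
qed

lemma exist_low:
  assumes n: "n \<ge> 2" and k: "k < n" and \<rho>: "0 \<le> \<rho>" "\<rho> \<le> 1"
  shows "\<exists>m. beta n k \<le> m \<and> m \<le> gamma n k \<and> Fk n k m = \<rho>"
proof -
  define G where "G = (\<lambda>m. \<rho> * cos (uu n k m) - cos (vv n k m))"
  have ab: "alpha n k < beta n k" "beta n k \<le> gamma n k" "0 \<le> beta n k"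
    using alpha_lt_beta[OF n k] beta_le_gamma[OF n k] beta_nonneg by auto
  have Gb: "G (beta n k) \<le> 0"
    unfolding G_def uu_beta[OF n] vv_beta[OF n] cos_minus
    using mult_right_mono[OF \<rho>(2) cos_beta_half[OF n k]] by simp
  have cg: "cos (uu n k (gamma n k)) > 0"
    using Fk_band(3)[OF n k _ order_refl] ab by simp
  have Gg: "G (gamma n k) \<ge> 0"
    unfolding G_def vv_gamma[OF n] using cg \<rho> by simp
  obtain m where m: "beta n k \<le> m" "m \<le> gamma n k" "G m = 0"
    using IVT'[of G "beta n k" 0 "gamma n k", OF Gb Gg ab(2)] cont_G unfolding G_def by auto
  have mb: "alpha n k < m" "0 \<le> m" using m ab by auto
  have "Fk n k m = cos (vv n k m) / cos (uu n k m)" by (rule Fk_band(2)[OF n k mb(1) m(2) mb(2)])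
  also have "cos (vv n k m) = \<rho> * cos (uu n k m)" using m(3) unfolding G_def by simp
  finally have "Fk n k m = \<rho>" using Fk_band(3)[OF n k mb(1) m(2) mb(2)] by simp
  then show ?thesis using m by blast
qed

lemma exist_high:
  assumes n: "n \<ge> 2" and k: "k < n" "2 \<le> k" and \<rho>: "1 \<le> \<rho>"
  shows "\<exists>m. alpha n k < m \<and> m \<le> beta n k \<and> Fk n k m = \<rho>"
proof -
  define G where "G = (\<lambda>m. \<rho> * cos (uu n k m) - cos (vv n k m))"
  have ab: "alpha n k < beta n k" "beta n k \<le> gamma n k" "0 \<le> beta n k"
    using alpha_lt_beta[OF n k(1)] beta_le_gamma[OF n k(1)] beta_nonneg by auto
  have a0: "0 < alpha n k" "alpha n k < pi" using n k unfolding alpha_def by (auto simp: field_simps)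
  have Ga: "G (alpha n k) < 0"
    unfolding G_def uu_alpha[OF n] vv_alpha[OF n] using sin_gt_zero[OF a0] by (simp add: cos_diff)
  have Gb: "G (beta n k) \<ge> 0"
    unfolding G_def uu_beta[OF n] vv_beta[OF n] cos_minus
    using mult_right_mono[OF \<rho> cos_beta_half[OF n k(1)]] by simp
  obtain m where m: "alpha n k \<le> m" "m \<le> beta n k" "G m = 0"
    using IVT'[of G "alpha n k" 0 "beta n k"] Ga Gb ab cont_G unfolding G_def by fastforce
  have ma: "alpha n k \<noteq> m" using m(3) Ga by auto
  have mb: "alpha n k < m" "0 \<le> m" "m \<le> gamma n k" using m ab ma a0 by auto
  have "Fk n k m = cos (vv n k m) / cos (uu n k m)" by (rule Fk_band(2)[OF n k(1) mb(1) mb(3) mb(2)])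
  also have "cos (vv n k m) = \<rho> * cos (uu n k m)" using m(3) unfolding G_def by simp
  finally have "Fk n k m = \<rho>" using Fk_band(3)[OF n k(1) mb(1) mb(3) mb(2)] by simp
  then show ?thesis using mb m by blast
qed

lemma uniq0:
  assumes n: "n \<ge> 2" and k: "k < n" and m: "alpha n k < m" "m \<le> gamma n k" "0 \<le> m"
    and F: "Fk n k m = 0"
  shows "m = gamma n k"
proof -
  note b = band[OF n k m]
  have c: "cos (vv n k m) = 0" using F Fk_band(2,3)[OF n k m] by simp
  have "\<not> vv n k m < pi/2"
  proof
    assume "vv n k m < pi/2"
    then have "cos (vv n k m) > 0" using b by (intro cos_gt_zero_pi) auto
    with c show False by simp
  qed
  then have e: "vv n k m = pi / 2" using b(4) by linarith
  have "m * (real n + 1) = (real k + 1) * pi" using e unfolding vv_def by (simp add: field_simps)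
  then show ?thesis unfolding gamma_def by (simp add: eq_divide_eq)
qed

lemma uniq1:
  assumes n: "n \<ge> 2" and k: "k < n" and m: "alpha n k < m" "m \<le> gamma n k" "0 \<le> m"
    and F: "Fk n k m = 1"
  shows "m = beta n k \<or> m = 0"
proof -
  note b = band[OF n k m]
  have "cos (vv n k m) = cos (uu n k m)" using F Fk_band(2,3)[OF n k m] by simp
  moreover have ca: "\<And>x::real. cos \<bar>x\<bar> = cos x" by (simp add: abs_if)
  ultimately have "cos \<bar>vv n k m\<bar> = cos \<bar>uu n k m\<bar>" by (simp only:)
  moreover have "- pi \<le> vv n k m \<and> vv n k m \<le> pi" using b pi_gt_zero by linarith
  then have "\<bar>vv n k m\<bar> \<le> pi" by (simp add: abs_le_iff)
  moreover have "- pi \<le> uu n k m \<and> uu n k m \<le> pi" using b pi_gt_zero by linarith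
  then have "\<bar>uu n k m\<bar> \<le> pi" by (simp add: abs_le_iff)
  ultimately have "\<bar>vv n k m\<bar> = \<bar>uu n k m\<bar>" by (metis abs_ge_zero cos_inj_pi)
  then have "vv n k m = uu n k m \<or> vv n k m = - uu n k m" by (simp add: abs_eq_iff)
  then show ?thesis
  proof
    assume "vv n k m = uu n k m"
    then have "m = 0" unfolding vv_def uu_def by (simp add: field_simps)
    then show ?thesis by simp
  next
    assume "vv n k m = - uu n k m"
    then have "m * real n = real k * pi" unfolding vv_def uu_def by (simp add: field_simps)
    then show ?thesis unfolding beta_def using n by (simp add: eq_divide_eq)
  qed
qed


lemma exists_cosh_ge: "(\<rho>::real) \<ge> 1 \<Longrightarrow> \<exists>X\<ge>0. cosh X \<ge> \<rho>"
proof -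
  assume r: "\<rho> \<ge> 1"
  have p: "2 * \<rho> > 0" using r by simp
  have "cosh (ln (2 * \<rho>)) = (2 * \<rho> + inverse (2 * \<rho>)) / 2" by (rule cosh_ln_real[OF p])
  also have "\<dots> \<ge> \<rho>" using p by (simp add: field_simps)
  finally have "cosh (ln (2 * \<rho>)) \<ge> \<rho>" .
  moreover have "ln (2 * \<rho>) \<ge> 0" using r by simp
  ultimately show ?thesis by blast
qed

lemma ch_ge_cosh:
  assumes n: "n \<ge> 2" and x: "x \<ge> 0"
  shows "cosh x \<le> ch n x"
proof -
  define b where "b = x * (real n - 1) / 2"
  have a: "x * (real n + 1) / 2 = b + x" unfolding b_def by (simp add: field_simps)
  have b0: "b \<ge> 0" unfolding b_def using n x by simp
  have "cosh b * cosh x \<le> cosh b * cosh x + sinh b * sinh x" using b0 x by simp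
  also have "\<dots> = cosh (x * (real n + 1) / 2)" unfolding a cosh_add by simp
  finally show ?thesis unfolding ch_def b_def[symmetric] by (simp add: pos_le_divide_eq mult.commute)
qed

lemma sh_ge_cosh:
  assumes n: "n \<ge> 2" and x: "x > 0"
  shows "cosh x \<le> sh n x"
proof -
  define b where "b = x * (real n - 1) / 2"
  have a: "x * (real n + 1) / 2 = b + x" unfolding b_def by (simp add: field_simps)
  have b0: "b > 0" unfolding b_def using n x by simp
  have "sinh b * cosh x \<le> sinh b * cosh x + cosh b * sinh x" using b0 x by simp
  also have "\<dots> = sinh (x * (real n + 1) / 2)" unfolding a sinh_add by simp
  finally show ?thesis unfolding sh_def b_def[symmetric] using x b0 by (simp add: pos_le_divide_eq mult.commute)
qed

lemma sh_gt_ch: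
  assumes n: "n \<ge> 2" and x: "x > 0"
  shows "ch n x < sh n x"
proof -
  define b where "b = x * (real n - 1) / 2"
  define a where "a = x * (real n + 1) / 2"
  have ab: "a - b = x" unfolding a_def b_def by (simp add: field_simps)
  have b0: "b > 0" unfolding b_def using n x by simp
  have "0 < sinh (a - b)" unfolding ab using x by simp
  then have "cosh a * sinh b < sinh a * cosh b" unfolding sinh_diff by simp
  then have "cosh a / cosh b < sinh a / sinh b" using b0 by (simp add: divide_simps)
  then show ?thesis unfolding ch_def sh_def a_def[symmetric] b_def[symmetric] using x by simp
qed

lemma ch_gt1: "n \<ge> 2 \<Longrightarrow> x > 0 \<Longrightarrow> ch n x > 1"
  using ch_ge_cosh[of n x] cosh_real_nonneg_less_iff[of 0 x] by simp

lemma ch_0: "ch n 0 = 1" unfolding ch_def by simp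

lemma cont_ch: "continuous_on S (ch n)"
proof -
  have "continuous_on S (\<lambda>x. cosh (x * (real n + 1) / 2) / cosh (x * (real n - 1) / 2))"
    by (intro continuous_intros) (auto simp: add_pos_pos)
  then show ?thesis unfolding ch_def[abs_def] .
qed

lemma sinh_ratio_lim: "((\<lambda>y. sinh (y * c) / y) \<longlongrightarrow> c) (at (0::real))"
proof -
  have "((\<lambda>y. sinh (y * c)) has_real_derivative cosh (0 * c) * c) (at 0)"
    by (auto intro!: derivative_eq_intros)
  then have "((\<lambda>y. (sinh (y * c) - sinh (0 * c)) / (y - 0)) \<longlongrightarrow> cosh (0 * c) * c) (at 0)"
    by (simp only: has_field_derivative_iff)
  then show ?thesis by simp
qed

lemma sin_ratio_lim: "((\<lambda>y. sin (y * c) / y) \<longlongrightarrow> c) (at (0::real))"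
proof -
  have "((\<lambda>y. sin (y * c)) has_real_derivative cos (0 * c) * c) (at 0)"
    by (auto intro!: derivative_eq_intros)
  then have "((\<lambda>y. (sin (y * c) - sin (0 * c)) / (y - 0)) \<longlongrightarrow> cos (0 * c) * c) (at 0)"
    by (simp only: has_field_derivative_iff)
  then show ?thesis by simp
qed

lemma xi_ratio: "n \<ge> 2 \<Longrightarrow> ((real n + 1) / 2) / ((real n - 1) / 2) = xi n"
  unfolding xi_def by (simp add: field_simps)

lemma sh_lim: assumes n: "n \<ge> 2"
  shows "((\<lambda>y. sinh (y * (real n + 1) / 2) / sinh (y * (real n - 1) / 2)) \<longlongrightarrow> xi n) (at 0)"
proof -
  have c: "(real n - 1) / 2 \<noteq> 0" using n by simp
  have "((\<lambda>y. (sinh (y * ((real n + 1) / 2)) / y) / (sinh (y * ((real n - 1) / 2)) / y))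
        \<longlongrightarrow> ((real n + 1) / 2) / ((real n - 1) / 2)) (at 0)"
    by (intro tendsto_divide sinh_ratio_lim c)
  moreover have "eventually (\<lambda>y. (sinh (y * ((real n + 1) / 2)) / y) / (sinh (y * ((real n - 1) / 2)) / y)
      = sinh (y * (real n + 1) / 2) / sinh (y * (real n - 1) / 2)) (at (0::real))"
    unfolding eventually_at_filter by (auto simp: times_divide_eq_right)
  ultimately show ?thesis unfolding xi_ratio[OF n] by (rule Lim_transform_eventually)
qed

lemma st_lim: assumes n: "n \<ge> 2"
  shows "((\<lambda>y. sin (y * (real n + 1) / 2) / sin (y * (real n - 1) / 2)) \<longlongrightarrow> xi n) (at 0)"
proof -
  have c: "(real n - 1) / 2 \<noteq> 0" using n by simp
  have "((\<lambda>y. (sin (y * ((real n + 1) / 2)) / y) / (sin (y * ((real n - 1) / 2)) / y))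
        \<longlongrightarrow> ((real n + 1) / 2) / ((real n - 1) / 2)) (at 0)"
    by (intro tendsto_divide sin_ratio_lim c)
  moreover have "eventually (\<lambda>y. (sin (y * ((real n + 1) / 2)) / y) / (sin (y * ((real n - 1) / 2)) / y)
      = sin (y * (real n + 1) / 2) / sin (y * (real n - 1) / 2)) (at (0::real))"
    unfolding eventually_at_filter by (auto simp: times_divide_eq_right)
  ultimately show ?thesis unfolding xi_ratio[OF n] by (rule Lim_transform_eventually)
qed

lemma cont_if0:
  fixes g :: "real \<Rightarrow> real"
  assumes lim: "(g \<longlongrightarrow> v) (at 0)" and c: "\<And>y. y \<in> S \<Longrightarrow> y \<noteq> 0 \<Longrightarrow> isCont g y"
  shows "continuous_on S (\<lambda>y. if y = 0 then v else g y)"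
proof (rule continuous_at_imp_continuous_on, intro ballI)
  fix x assume x: "x \<in> S"
  show "isCont (\<lambda>y. if y = 0 then v else g y) x"
  proof (cases "x = 0")
    case True
    have "eventually (\<lambda>y. g y = (if y = 0 then v else g y)) (at (0::real))"
      unfolding eventually_at_filter by auto
    then have "((\<lambda>y. if y = 0 then v else g y) \<longlongrightarrow> v) (at 0)"
      using lim by (rule Lim_transform_eventually[rotated])
    then show ?thesis unfolding True isCont_def by simp
  next
    case False
    have "eventually (\<lambda>y. y \<noteq> 0) (nhds x)" using False by (rule t1_space_nhds)
    then have "eventually (\<lambda>y. (if y = 0 then v else g y) = g y) (nhds x)"
      by (rule eventually_mono) auto
    then show ?thesis using c[OF x False] by (simp add: isCont_cong)
  qed
qed

lemma cont_sh: assumes n: "n \<ge> 2" shows "continuous_on S (sh n)"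
proof -
  have "continuous_on S (\<lambda>y. if y = 0 then xi n else sinh (y * (real n + 1) / 2) / sinh (y * (real n - 1) / 2))"
  proof (rule cont_if0[OF sh_lim[OF n]])
    fix y :: real assume "y \<noteq> 0"
    then have "sinh (y * (real n - 1) / 2) \<noteq> 0" using n by simp
    then show "isCont (\<lambda>y. sinh (y * (real n + 1) / 2) / sinh (y * (real n - 1) / 2)) y"
      by (intro continuous_intros) auto
  qed
  then show ?thesis unfolding sh_def[abs_def] .
qed

lemma cont_st1: assumes n: "n \<ge> 2" shows "continuous_on {0..beta n 1} (st n)"
proof -
  have "continuous_on {0..beta n 1} (\<lambda>y. if y = 0 then xi n else sin (y * (real n + 1) / 2) / sin (y * (real n - 1) / 2))"
  proof (rule cont_if0[OF st_lim[OF n]])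
    fix y :: real assume y: "y \<in> {0..beta n 1}" "y \<noteq> 0"
    have "trigk 1 (y * (real n - 1) / 2) \<noteq> 0"
      using Fk_band(1)[OF n _ _ _ , of 1 y] y alpha_lt_beta[OF n, of 1] beta_le_gamma[OF n, of 1] n
      unfolding alpha_def by auto
    then have "sin (y * (real n - 1) / 2) \<noteq> 0" unfolding trigk_def by simp
    then show "isCont (\<lambda>y. sin (y * (real n + 1) / 2) / sin (y * (real n - 1) / 2)) y"
      by (intro continuous_intros) auto
  qed
  then show ?thesis unfolding st_def[abs_def] .
qed

lemma st_beta1: assumes n: "n \<ge> 2" shows "st n (beta n 1) = 1"
proof -
  have b: "alpha n 1 < beta n 1" "beta n 1 \<le> gamma n 1" "0 \<le> beta n 1"
    using alpha_lt_beta[OF n, of 1] beta_le_gamma[OF n, of 1] beta_nonneg n by auto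
  have F: "Fk n 1 (beta n 1) = cos (vv n 1 (beta n 1)) / cos (uu n 1 (beta n 1))"
    using Fk_band(2)[OF n _ b] n by simp
  have "pi / (2 * real n) < pi / 2" using n by (simp add: field_simps)
  then have "cos (pi / (2 * real n)) > 0" using n by (intro cos_gt_zero) auto
  then have "cos (real 1 * pi / (2 * real n)) \<noteq> 0" by simp
  then have "cos (vv n 1 (beta n 1)) / cos (uu n 1 (beta n 1)) = 1" unfolding uu_beta[OF n] vv_beta[OF n] cos_minus
    by simp
  with F show ?thesis unfolding Fk_def by simp
qed

lemma exist_ch: assumes n: "n \<ge> 2" and r: "\<rho> \<ge> 1" shows "\<exists>x\<ge>0. ch n x = \<rho>"
proof -
  obtain X where X: "X \<ge> 0" "cosh X \<ge> \<rho>" using exists_cosh_ge[OF r] by blast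
  have "ch n 0 \<le> \<rho>" "\<rho> \<le> ch n X" using r X ch_ge_cosh[OF n X(1)] ch_0 by auto
  from IVT'[of "ch n" 0 \<rho> X, OF this X(1) cont_ch] show ?thesis by auto
qed

lemma exist_sh: assumes n: "n \<ge> 2" and r: "\<rho> \<ge> xi n" shows "\<exists>x\<ge>0. sh n x = \<rho>"
proof -
  have r1: "\<rho> \<ge> 1" using r xi_gt1[OF n] by simp
  obtain X where X: "X \<ge> 0" "cosh X \<ge> \<rho>" using exists_cosh_ge[OF r1] by blast
  show ?thesis
  proof (cases "X = 0")
    case True
    then have "\<rho> = 1" using X r1 by simp
    then show ?thesis using xi_gt1[OF n] r by simp
  next
    case False
    then have "X > 0" using X by simp
    have "sh n 0 \<le> \<rho>" "\<rho> \<le> sh n X" using r X sh_ge_cosh[OF n \<open>X > 0\<close>] unfolding sh_def by auto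
    from IVT'[of "sh n" 0 \<rho> X, OF this X(1) cont_sh[OF n]] show ?thesis by auto
  qed
qed

lemma exist_st1: assumes n: "n \<ge> 2" and r: "1 \<le> \<rho>" "\<rho> \<le> xi n"
  shows "\<exists>m. 0 \<le> m \<and> m \<le> beta n 1 \<and> st n m = \<rho>"
proof -
  have "st n (beta n 1) \<le> \<rho>" "\<rho> \<le> st n 0" using r st_beta1[OF n] unfolding st_def by auto
  from IVT2'[of "st n" "beta n 1" \<rho> 0, OF this beta_nonneg cont_st1[OF n]] show ?thesis by auto
qed


lemma cos_ii: "cos (\<i> * complex_of_real y) = complex_of_real (cosh y)"
proof -
  have "cosh y = (exp y + inverse (exp y)) / 2" by (simp add: cosh_def exp_minus)
  then show ?thesis using cosh_real[of y] by (simp only:)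
qed

lemma sin_ii: "sin (\<i> * complex_of_real y) = \<i> * complex_of_real (sinh y)"
proof -
  have "sinh y = (exp y - inverse (exp y)) / 2" by (simp add: sinh_def exp_minus)
  then have "complex_of_real (sinh y) = -\<i> * sin (\<i> * complex_of_real y)" using sinh_real[of y] by (simp only:)
  then have "\<i> * complex_of_real (sinh y) = \<i> * (-\<i>) * sin (\<i> * complex_of_real y)" by simp
  then show ?thesis by simp
qed

lemma arg_ii: "(\<i> * complex_of_real x) * (of_nat n + 1) / 2 = \<i> * complex_of_real (x * (real n + 1) / 2)"
  "(\<i> * complex_of_real x) * (of_nat n - 1) / 2 = \<i> * complex_of_real (x * (real n - 1) / 2)"
  by (simp_all add: field_simps)

lemma arg_re: "complex_of_real m * (of_nat n + 1) / 2 = complex_of_real (m * (real n + 1) / 2)"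
  "complex_of_real m * (of_nat n - 1) / 2 = complex_of_real (m * (real n - 1) / 2)"
  by (simp_all add: field_simps)

definition inD :: "complex \<Rightarrow> bool" where
  "inD \<mu> \<longleftrightarrow> (\<exists>m. \<mu> = complex_of_real m \<and> 0 \<le> m \<and> m < pi) \<or> (\<exists>x. \<mu> = \<i> * complex_of_real x \<and> 0 \<le> x)"

definition GR :: "nat \<Rightarrow> real \<Rightarrow> nat \<Rightarrow> complex \<Rightarrow> bool" where
  "GR n \<rho> k \<mu> \<longleftrightarrow> inD \<mu> \<and>
    ((even k \<and> cos (\<mu> * (of_nat n + 1) / 2) = of_real \<rho> * cos (\<mu> * (of_nat n - 1) / 2) \<and> cos (\<mu> * (of_nat n - 1) / 2) \<noteq> 0)
     \<or> (odd k \<and> sin (\<mu> * (of_nat n + 1) / 2) = of_real \<rho> * sin (\<mu> * (of_nat n - 1) / 2) \<and> sin (\<mu> * (of_nat n - 1) / 2) \<noteq> 0)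
     \<or> (\<mu> = 0 \<and> \<rho> = xi n \<and> k = 1))"

lemma GR_eig:
  assumes n: "n \<ge> 2" and \<rho>: "0 \<le> \<rho>" "\<rho> \<noteq> 1" and G: "GR n \<rho> k \<mu>"
  shows "lam_formula1_denom \<rho> \<mu> \<noteq> 0 \<and> eigenvalue (map_mat complex_of_real (KMS n \<rho>)) (lam_formula1 \<rho> \<mu>)"
  using G eig_cos[of \<mu> n \<rho>] eig_sin[of \<mu> n \<rho>] eig_lin[OF n] n \<rho> unfolding GR_def by auto

lemma inD_sin:
  assumes "inD \<mu>" "\<mu> \<noteq> 0" shows "sin \<mu> \<noteq> 0"
  using assms unfolding inD_def
proof (elim disjE exE conjE)
  fix m assume m: "\<mu> = complex_of_real m" "0 \<le> m" "m < pi"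
  then have "m > 0" using assms(2) by auto
  then have "sin m > 0" using m by (intro sin_gt_zero) auto
  then show "sin \<mu> \<noteq> 0" unfolding m sin_of_real by simp
next
  fix x assume x: "\<mu> = \<i> * complex_of_real x" "0 \<le> x"
  then have "x \<noteq> 0" using assms(2) by auto
  then show "sin \<mu> \<noteq> 0" unfolding x sin_ii by simp
qed

lemma GR_formula:
  assumes n: "n \<ge> 2" and G: "GR n \<rho> k \<mu>" and that: "\<mu> \<noteq> 0 \<or> k = 1"
  shows "lam_formula1_denom \<rho> \<mu> \<noteq> 0 \<and> lam_formula2 n k \<mu> = lam_formula1 \<rho> \<mu>"
proof (cases "\<mu> = 0 \<and> \<rho> = xi n \<and> k = 1")
  case True
  then show ?thesis using formula_lin[OF n] by simp
next
  case False
  then have m0: "\<mu> \<noteq> 0"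
  proof -
    { assume "\<mu> = 0"
      then have "k = 1" using that by simp
      with G False \<open>\<mu> = 0\<close> have False unfolding GR_def by auto }
    then show ?thesis by auto
  qed
  have s: "sin \<mu> \<noteq> 0" using inD_sin[OF _ m0] G unfolding GR_def by auto
  show ?thesis using G False formula_cos[OF _ _ s] formula_sin[OF _ _ s] unfolding GR_def by auto
qed

lemma cos_le_cosh: "cos (m::real) = cosh x \<Longrightarrow> cos m = 1 \<and> cosh x = 1"
  using cos_le_one[of m] cosh_real_ge_1[of x] by linarith

lemma inD_cos_inj:
  assumes "inD \<mu>1" "inD \<mu>2" "cos \<mu>1 = cos \<mu>2" shows "\<mu>1 = \<mu>2"
proof -
  have cos0: "0 \<le> m \<Longrightarrow> m < pi \<Longrightarrow> cos m = 1 \<Longrightarrow> m = 0" for m :: real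
    using cos_inj_pi[of m 0] by simp
  have cosh0: "0 \<le> x \<Longrightarrow> cosh x = 1 \<Longrightarrow> x = 0" for x :: real
    using cosh_real_nonneg_le_iff[of x 0] by simp
  show ?thesis using assms(1,2) unfolding inD_def
  proof (elim disjE exE conjE)
    fix m1 m2 assume a: "\<mu>1 = complex_of_real m1" "0 \<le> m1" "m1 < pi" "\<mu>2 = complex_of_real m2" "0 \<le> m2" "m2 < pi"
    then have "cos m1 = cos m2" using assms(3) by (simp add: cos_of_real)
    then have "m1 = m2" using a cos_inj_pi[of m1 m2] by auto
    then show ?thesis using a by simp
  next
    fix m1 x2 assume a: "\<mu>1 = complex_of_real m1" "0 \<le> m1" "m1 < pi" "\<mu>2 = \<i> * complex_of_real x2" "0 \<le> x2"
    then have "cos m1 = cosh x2" using assms(3) by (simp add: cos_of_real cos_ii)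
    then have "m1 = 0" "x2 = 0" using cos_le_cosh cos0 cosh0 a by blast+
    then show ?thesis using a by simp
  next
    fix m2 x1 assume a: "\<mu>2 = complex_of_real m2" "0 \<le> m2" "m2 < pi" "\<mu>1 = \<i> * complex_of_real x1" "0 \<le> x1"
    then have "cos m2 = cosh x1" using assms(3) by (simp add: cos_of_real cos_ii)
    then have "m2 = 0" "x1 = 0" using cos_le_cosh cos0 cosh0 a by blast+
    then show ?thesis using a by simp
  next
    fix x1 x2 assume a: "\<mu>1 = \<i> * complex_of_real x1" "0 \<le> x1" "\<mu>2 = \<i> * complex_of_real x2" "0 \<le> x2"
    then have "cosh x1 = cosh x2" using assms(3) by (simp add: cos_ii)
    then have "x1 = x2" using a cosh_real_nonneg_le_iff[of x1 x2] cosh_real_nonneg_le_iff[of x2 x1] by auto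
    then show ?thesis using a by simp
  qed
qed

lemma formula1_inj:
  assumes \<rho>: "0 < \<rho>" "\<rho> \<noteq> 1"
    and d: "lam_formula1_denom \<rho> \<mu>1 \<noteq> 0" "lam_formula1_denom \<rho> \<mu>2 \<noteq> 0"
    and D: "inD \<mu>1" "inD \<mu>2" and eq: "lam_formula1 \<rho> \<mu>1 = lam_formula1 \<rho> \<mu>2"
  shows "\<mu>1 = \<mu>2"
proof -
  have r2: "1 - (complex_of_real \<rho>)^2 \<noteq> 0"
  proof
    assume "1 - (complex_of_real \<rho>)^2 = 0"
    then have "complex_of_real (1 - \<rho>^2) = 0" by (simp add: of_real_power)
    then have "\<rho>^2 = 1" by (simp only: of_real_eq_0_iff)
    with \<rho> show False by (simp add: power2_eq_1_iff)
  qed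
  have "lam_formula1_denom \<rho> \<mu>1 = lam_formula1_denom \<rho> \<mu>2"
    using eq d r2 unfolding lam_formula1_def lam_formula1_denom_def by (auto simp: divide_simps)
  then have "cos \<mu>1 = cos \<mu>2" using \<rho> unfolding lam_formula1_denom_def by simp
  then show ?thesis by (rule inD_cos_inj[OF D])
qed


lemma real_root_GR:
  assumes n: "n \<ge> 2" and k: "k < n" and m: "alpha n k < m" "m \<le> gamma n k" "0 \<le> m"
    and F: "Fk n k m = \<rho>"
  shows "GR n \<rho> k (complex_of_real m)"
proof -
  have D: "inD (complex_of_real m)" unfolding inD_def using m gamma_lt_pi[OF n k] by auto
  have t: "trigk k (m * (real n - 1) / 2) \<noteq> 0" by (rule Fk_band(1)[OF n k m])
  show ?thesis
  proof (cases "even k")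
    case True
    then have cb: "cos (m * (real n - 1) / 2) \<noteq> 0" using t unfolding trigk_def by simp
    have "ct n m = \<rho>" using F True unfolding Fk_def by simp
    then have "cos (m * (real n + 1) / 2) = \<rho> * cos (m * (real n - 1) / 2)" using cb unfolding ct_def
      by (simp add: divide_eq_eq)
    then have "cos (complex_of_real m * (of_nat n + 1) / 2) = of_real \<rho> * cos (complex_of_real m * (of_nat n - 1) / 2)"
      unfolding arg_re cos_of_real by simp
    moreover have "cos (complex_of_real m * (of_nat n - 1) / 2) \<noteq> 0" unfolding arg_re cos_of_real using cb by simp
    ultimately show ?thesis using D True unfolding GR_def by blast
  next
    case False
    then have cb: "sin (m * (real n - 1) / 2) \<noteq> 0" using t unfolding trigk_def by simp
    have m0: "m \<noteq> 0" using Fk_band(4)[OF n k m] False by simp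
    have "st n m = \<rho>" using F False unfolding Fk_def by simp
    then have "sin (m * (real n + 1) / 2) = \<rho> * sin (m * (real n - 1) / 2)" using cb m0 unfolding st_def
      by (simp add: divide_eq_eq)
    then have "sin (complex_of_real m * (of_nat n + 1) / 2) = of_real \<rho> * sin (complex_of_real m * (of_nat n - 1) / 2)"
      unfolding arg_re sin_of_real by simp
    moreover have "sin (complex_of_real m * (of_nat n - 1) / 2) \<noteq> 0" unfolding arg_re sin_of_real using cb by simp
    ultimately show ?thesis using D False unfolding GR_def by blast
  qed
qed

lemma ch_GR:
  assumes n: "n \<ge> 2" and x: "0 \<le> x" and c: "ch n x = \<rho>"
  shows "GR n \<rho> 0 (\<i> * complex_of_real x)"
proof -
  have D: "inD (\<i> * complex_of_real x)" unfolding inD_def using x by auto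
  have cb: "cosh (x * (real n - 1) / 2) \<noteq> 0" by (simp add: order.strict_iff_not[symmetric])
  have "cosh (x * (real n + 1) / 2) = \<rho> * cosh (x * (real n - 1) / 2)" using c unfolding ch_def
    by (simp add: divide_eq_eq)
  then have "cos (\<i> * complex_of_real x * (of_nat n + 1) / 2) = of_real \<rho> * cos (\<i> * complex_of_real x * (of_nat n - 1) / 2)"
    unfolding arg_ii cos_ii by simp
  moreover have "cos (\<i> * complex_of_real x * (of_nat n - 1) / 2) \<noteq> 0" unfolding arg_ii cos_ii by simp
  ultimately show ?thesis using D unfolding GR_def by auto
qed

lemma sh_GR:
  assumes n: "n \<ge> 2" and x: "0 \<le> x" and c: "sh n x = \<rho>"
  shows "GR n \<rho> 1 (\<i> * complex_of_real x)"
proof -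
  have D: "inD (\<i> * complex_of_real x)" unfolding inD_def using x by auto
  show ?thesis
  proof (cases "x = 0")
    case True
    then show ?thesis using c D unfolding GR_def sh_def by simp
  next
    case False
    then have x0: "x > 0" using x by simp
    have cb: "sinh (x * (real n - 1) / 2) \<noteq> 0" using x0 n by simp
    have "sinh (x * (real n + 1) / 2) = \<rho> * sinh (x * (real n - 1) / 2)" using c False cb unfolding sh_def
      by (simp add: divide_eq_eq)
    then have "sin (\<i> * complex_of_real x * (of_nat n + 1) / 2) = of_real \<rho> * sin (\<i> * complex_of_real x * (of_nat n - 1) / 2)"
      unfolding arg_ii sin_ii by simp
    moreover have "sin (\<i> * complex_of_real x * (of_nat n - 1) / 2) \<noteq> 0" unfolding arg_ii sin_ii using cb by simp
    ultimately show ?thesis using D unfolding GR_def by auto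
  qed
qed

lemma st1_GR:
  assumes n: "n \<ge> 2" and m: "0 \<le> m" "m \<le> beta n 1" and c: "st n m = \<rho>"
  shows "GR n \<rho> 1 (complex_of_real m)"
proof (cases "m = 0")
  case True
  then show ?thesis using c unfolding GR_def inD_def st_def by auto
next
  case False
  have "alpha n 1 < m" "m \<le> gamma n 1" using m False beta_le_gamma[OF n, of 1] n unfolding alpha_def by auto
  moreover have "Fk n 1 m = \<rho>" using c unfolding Fk_def by simp
  ultimately show ?thesis using real_root_GR[OF n _ _ _ m(1)] n by auto
qed

definition slot :: "nat \<Rightarrow> real \<Rightarrow> nat \<Rightarrow> complex \<Rightarrow> bool" where
  "slot n \<rho> k \<mu> \<longleftrightarrow>
    (if \<rho> < 1 then (\<exists>m. \<mu> = complex_of_real m \<and> beta n k \<le> m \<and> m \<le> gamma n k \<and> Fk n k m = \<rho>)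
     else if k = 0 then (\<exists>x\<ge>0. \<mu> = \<i> * complex_of_real x \<and> ch n x = \<rho>)
     else if k = 1 then ((\<exists>m. \<mu> = complex_of_real m \<and> 0 \<le> m \<and> m \<le> beta n 1 \<and> st n m = \<rho>)
                        \<or> (\<exists>x\<ge>0. \<mu> = \<i> * complex_of_real x \<and> sh n x = \<rho>))
     else (\<exists>m. \<mu> = complex_of_real m \<and> alpha n k < m \<and> m \<le> beta n k \<and> Fk n k m = \<rho>))"

lemma slot_GR:
  assumes n: "n \<ge> 2" and k: "k < n" and s: "slot n \<rho> k \<mu>"
  shows "GR n \<rho> k \<mu>"
proof (cases "\<rho> < 1")
  case True
  then obtain m where m: "\<mu> = complex_of_real m" "beta n k \<le> m" "m \<le> gamma n k" "Fk n k m = \<rho>"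
    using s unfolding slot_def by auto
  have "alpha n k < m" "0 \<le> m" using m alpha_lt_beta[OF n k] beta_nonneg[of n k] by auto
  then show ?thesis using real_root_GR[OF n k _ m(3) _ m(4)] m(1) by simp
next
  case False
  show ?thesis
  proof (cases "k = 0")
    case True
    then show ?thesis using s False ch_GR[OF n] unfolding slot_def by auto
  next
    case k0: False
    show ?thesis
    proof (cases "k = 1")
      case True
      then show ?thesis using s False st1_GR[OF n] sh_GR[OF n] unfolding slot_def by auto
    next
      case False
      then obtain m where m: "\<mu> = complex_of_real m" "alpha n k < m" "m \<le> beta n k" "Fk n k m = \<rho>"
        using s k0 \<open>\<not> \<rho> < 1\<close> unfolding slot_def by auto
      have "0 \<le> m" using m alpha_nonneg[of k n] k0 n by auto
      moreover have "m \<le> gamma n k" using m beta_le_gamma[OF n k] by simp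
      ultimately show ?thesis using real_root_GR[OF n k m(2) _ _ m(4)] m(1) by simp
    qed
  qed
qed

lemma slot_exists:
  assumes n: "n \<ge> 2" and k: "k < n" and \<rho>: "0 \<le> \<rho>"
  shows "\<exists>\<mu>. slot n \<rho> k \<mu>"
proof (cases "\<rho> < 1")
  case True
  then show ?thesis using exist_low[OF n k \<rho>] unfolding slot_def by auto
next
  case False
  then have r1: "\<rho> \<ge> 1" by simp
  show ?thesis
  proof (cases "k = 0")
    case True
    then show ?thesis using exist_ch[OF n r1] False unfolding slot_def by auto
  next
    case k0: False
    show ?thesis
    proof (cases "k = 1")
      case True
      show ?thesis
      proof (cases "\<rho> \<le> xi n")
        case True
        then show ?thesis using exist_st1[OF n r1 True] False \<open>k = 1\<close> unfolding slot_def by auto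
      next
        case False
        then obtain x where "x \<ge> 0" "sh n x = \<rho>" using exist_sh[OF n, of \<rho>] by auto
        then show ?thesis using \<open>\<not> \<rho> < 1\<close> \<open>k = 1\<close> unfolding slot_def by auto
      qed
    next
      case False
      then have "2 \<le> k" using k0 by simp
      then show ?thesis using exist_high[OF n k _ r1] False k0 \<open>\<not> \<rho> < 1\<close> unfolding slot_def by auto
    qed
  qed
qed

lemma gamma_lt_beta: "n \<ge> 2 \<Longrightarrow> j < k \<Longrightarrow> gamma n j < beta n k"
  unfolding gamma_def beta_def
proof -
  assume n: "n \<ge> 2" and jk: "j < k"
  have "(real j + 1) * real n \<le> real k * real n" using jk by (simp add: mult_right_mono)
  also have "\<dots> < real k * (real n + 1)" using jk by (simp add: algebra_simps)
  finally have h: "(real j + 1) * real n < real k * (real n + 1)" .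
  have "pi * ((real j + 1) * real n) < pi * (real k * (real n + 1))" by (rule mult_strict_left_mono[OF h pi_gt_zero])
  then have "(real j + 1) * pi * real n < real k * pi * (real n + 1)" by (simp add: algebra_simps)
  then show "(real j + 1) * pi / (real n + 1) < real k * pi / real n" using n by (simp add: field_simps)
qed

lemma beta_le_alpha: "n \<ge> 2 \<Longrightarrow> j < k \<Longrightarrow> beta n j \<le> alpha n k"
  unfolding alpha_def beta_def
proof -
  assume n: "n \<ge> 2" and jk: "j < k"
  have "real j * (real n - 1) \<le> (real k - 1) * (real n - 1)" using jk n by (intro mult_right_mono) auto
  also have "\<dots> \<le> (real k - 1) * real n" using jk by (simp add: algebra_simps)
  finally have h: "real j * (real n - 1) \<le> (real k - 1) * real n" .
  have "pi * (real j * (real n - 1)) \<le> pi * ((real k - 1) * real n)" by (rule mult_left_mono[OF h]) simp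
  then have "real j * pi * (real n - 1) \<le> (real k - 1) * pi * real n"
    by (simp add: algebra_simps)
  then show "real j * pi / real n \<le> (real k - 1) * pi / (real n - 1)" using n by (simp add: field_simps)
qed

lemma re_ii_eq: "complex_of_real m = \<i> * complex_of_real x \<Longrightarrow> m = 0 \<and> x = 0"
  by (simp add: complex_eq_iff)

lemma slot_disj:
  assumes n: "n \<ge> 2" and \<rho>: "0 < \<rho>" "\<rho> \<noteq> 1" and jk: "j < k" and k: "k < n"
    and sj: "slot n \<rho> j \<mu>" and sk: "slot n \<rho> k \<mu>"
  shows False
proof (cases "\<rho> < 1")
  case True
  then obtain m m' where m: "\<mu> = complex_of_real m" "m \<le> gamma n j" "\<mu> = complex_of_real m'" "beta n k \<le> m'"
    using sj sk unfolding slot_def by auto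
  then have "m = m'" by simp
  then show False using m gamma_lt_beta[OF n jk] by simp
next
  case False
  have ak: "k \<ge> 2 \<Longrightarrow> alpha n k > 0" using n k unfolding alpha_def by auto
  show False
  proof (cases "j = 0")
    case j0: True
    then obtain x where x: "x \<ge> 0" "\<mu> = \<i> * complex_of_real x" "ch n x = \<rho>"
      using sj False unfolding slot_def by auto
    have x0: "x \<noteq> 0" using x ch_0[of n] \<rho> by auto
    show False
    proof (cases "k = 1")
      case True
      then have "(\<exists>m. \<mu> = complex_of_real m \<and> 0 \<le> m \<and> m \<le> beta n 1 \<and> st n m = \<rho>)
                        \<or> (\<exists>x\<ge>0. \<mu> = \<i> * complex_of_real x \<and> sh n x = \<rho>)" using sk False unfolding slot_def by auto
      then show False
      proof (elim disjE exE conjE)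
        fix m assume "\<mu> = complex_of_real m"
        then show False using re_ii_eq x x0 by metis
      next
        fix x' assume "\<mu> = \<i> * complex_of_real x'" "sh n x' = \<rho>"
        then have "x' = x" "sh n x = \<rho>" using x by auto
        then show False using sh_gt_ch[OF n, of x] x x0 by simp
      qed
    next
      case False
      then obtain m where "\<mu> = complex_of_real m" using sk \<open>\<not> \<rho> < 1\<close> jk j0 unfolding slot_def by auto
      then show False using re_ii_eq x x0 by metis
    qed
  next
    case j0: False
    then have k2: "k \<ge> 2" "k \<noteq> 1" "k \<noteq> 0" using jk by auto
    obtain m' where m': "\<mu> = complex_of_real m'" "alpha n k < m'"
      using sk False k2 unfolding slot_def by auto
    show False
    proof (cases "j = 1")
      case True
      then have "(\<exists>m. \<mu> = complex_of_real m \<and> 0 \<le> m \<and> m \<le> beta n 1 \<and> st n m = \<rho>)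
                        \<or> (\<exists>x\<ge>0. \<mu> = \<i> * complex_of_real x \<and> sh n x = \<rho>)" using sj False unfolding slot_def by auto
      then show False
      proof (elim disjE exE conjE)
        fix m assume "\<mu> = complex_of_real m" "m \<le> beta n 1"
        then show False using m' beta_le_alpha[OF n, of 1 k] jk True by simp
      next
        fix x assume "\<mu> = \<i> * complex_of_real x"
        then have "m' = 0" using m' re_ii_eq by metis
        then show False using m' ak k2 by simp
      qed
    next
      case False
      then obtain m where "\<mu> = complex_of_real m" "m \<le> beta n j"
        using sj \<open>\<not> \<rho> < 1\<close> j0 unfolding slot_def by auto
      then show False using m' beta_le_alpha[OF n jk] by simp
    qed
  qed
qed

lemma count_slots:
  fixes P :: "nat \<Rightarrow> 'a \<Rightarrow> bool" and g :: "'a \<Rightarrow> 'b" and E :: "'b set"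
  assumes ex: "\<And>k. k < n \<Longrightarrow> \<exists>x. P k x"
    and disj: "\<And>j k x. j < n \<Longrightarrow> k < n \<Longrightarrow> P j x \<Longrightarrow> P k x \<Longrightarrow> j = k"
    and inj: "inj_on g {x. \<exists>k<n. P k x}"
    and img: "\<And>k x. k < n \<Longrightarrow> P k x \<Longrightarrow> g x \<in> E"
    and fin: "finite E" and card: "card E \<le> n"
    and k: "k < n" and a: "P k a" and b: "P k b"
  shows "a = b"
proof (rule ccontr)
  assume ab: "a \<noteq> b"
  define f where "f = (\<lambda>j. if j = k then a else (SOME x. P j x))"
  have Pf: "P j (f j)" if "j < n" for j
    using someI_ex[OF ex[OF that]] a unfolding f_def by auto
  have injf: "inj_on f {..<n}"
  proof (rule inj_onI)
    fix i j assume "i \<in> {..<n}" "j \<in> {..<n}" "f i = f j"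
    then show "i = j" using Pf[of i] Pf[of j] disj[of i j "f i"] by auto
  qed
  have bn: "b \<notin> f ` {..<n}"
  proof
    assume "b \<in> f ` {..<n}"
    then obtain j where j: "j < n" "b = f j" by auto
    show False
    proof (cases "j = k")
      case True then show False using j ab unfolding f_def by simp
    next
      case False then show False using disj[OF j(1) k _ b] Pf[OF j(1)] j by simp
    qed
  qed
  define X where "X = insert b (f ` {..<n})"
  have cX: "card X = Suc n" unfolding X_def using bn card_image[OF injf] by simp
  have XS: "X \<subseteq> {x. \<exists>k<n. P k x}" unfolding X_def using Pf k b by auto
  have injX: "inj_on g X" using inj XS by (rule inj_on_subset)
  have "g ` X \<subseteq> E" using XS img by auto
  then have "card (g ` X) \<le> card E" using fin by (rule card_mono[rotated])
  then have "Suc n \<le> n" using card_image[OF injX] cX card by simp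
  then show False by simp
qed

lemma eig_set:
  assumes n: "n \<ge> 1"
  shows "finite {x. eigenvalue (map_mat complex_of_real (KMS n \<rho>)) x}"
    and "card {x. eigenvalue (map_mat complex_of_real (KMS n \<rho>)) x} \<le> n"
proof -
  let ?A = "map_mat complex_of_real (KMS n \<rho>)"
  have dm: "degree (char_poly ?A) = n" "coeff (char_poly ?A) n = 1"
    using degree_monic_char_poly[OF KMS_carrier] by auto
  have nz: "char_poly ?A \<noteq> 0" using dm by auto
  have eq: "{x. eigenvalue ?A x} = {x. poly (char_poly ?A) x = 0}"
    using eigenvalue_root_char_poly[OF KMS_carrier] by auto
  show "finite {x. eigenvalue ?A x}" unfolding eq using poly_roots_finite[OF nz] .
  show "card {x. eigenvalue ?A x} \<le> n" unfolding eq using card_poly_roots_bound[OF nz] dm by simp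
qed

lemma slot_unique:
  assumes n: "n \<ge> 2" and \<rho>: "0 < \<rho>" "\<rho> \<noteq> 1" and k: "k < n"
    and a: "slot n \<rho> k a" and b: "slot n \<rho> k b"
  shows "a = b"
proof (rule count_slots[where P = "slot n \<rho>" and n = n and g = "lam_formula1 \<rho>"
      and E = "{x. eigenvalue (map_mat complex_of_real (KMS n \<rho>)) x}", OF _ _ _ _ _ _ k a b])
  show "\<And>k. k < n \<Longrightarrow> \<exists>x. slot n \<rho> k x" using slot_exists[OF n] \<rho> by auto
  show "j = k" if "j < n" "k < n" "slot n \<rho> j x" "slot n \<rho> k x" for j k x
  proof (rule ccontr)
    assume "j \<noteq> k"
    then have "j < k \<or> k < j" by linarith
    then show False using slot_disj[OF n \<rho>] that by blast
  qed
  show "inj_on (lam_formula1 \<rho>) {x. \<exists>k<n. slot n \<rho> k x}"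
  proof (rule inj_onI)
    fix x y assume "x \<in> {x. \<exists>k<n. slot n \<rho> k x}" "y \<in> {x. \<exists>k<n. slot n \<rho> k x}"
      and e: "lam_formula1 \<rho> x = lam_formula1 \<rho> y"
    then obtain i j where "i < n" "slot n \<rho> i x" "j < n" "slot n \<rho> j y" by auto
    then have G: "GR n \<rho> i x" "GR n \<rho> j y" using slot_GR[OF n] by auto
    have r0: "0 \<le> \<rho>" using \<rho> by simp
    have d: "lam_formula1_denom \<rho> x \<noteq> 0" "lam_formula1_denom \<rho> y \<noteq> 0"
      using GR_eig[OF n r0 \<rho>(2) G(1)] GR_eig[OF n r0 \<rho>(2) G(2)] by auto
    have D: "inD x" "inD y" using G unfolding GR_def by auto
    show "x = y" by (rule formula1_inj[OF \<rho> d D e])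
  qed
  show "\<And>k x. k < n \<Longrightarrow> slot n \<rho> k x \<Longrightarrow> lam_formula1 \<rho> x \<in> {x. eigenvalue (map_mat complex_of_real (KMS n \<rho>)) x}"
  proof -
    fix k x assume "k < n" "slot n \<rho> k x"
    then have "GR n \<rho> k x" using slot_GR[OF n] by auto
    then show "lam_formula1 \<rho> x \<in> {x. eigenvalue (map_mat complex_of_real (KMS n \<rho>)) x}"
      using GR_eig[OF n _ \<rho>(2)] \<rho> by auto
  qed
  show "finite {x. eigenvalue (map_mat complex_of_real (KMS n \<rho>)) x}" using eig_set n by auto
  show "card {x. eigenvalue (map_mat complex_of_real (KMS n \<rho>)) x} \<le> n" using eig_set n by auto
qed


lemma ex1_from: "P x0 \<Longrightarrow> (\<And>a b. P a \<Longrightarrow> P b \<Longrightarrow> a = b) \<Longrightarrow> \<exists>!x. P x"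
  by blast

lemma slot_low: "\<rho> < 1 \<Longrightarrow> slot n \<rho> k \<mu> \<longleftrightarrow> (\<exists>m. \<mu> = complex_of_real m \<and> beta n k \<le> m \<and> m \<le> gamma n k \<and> Fk n k m = \<rho>)"
  unfolding slot_def by simp

lemma slot_0: "\<not> \<rho> < 1 \<Longrightarrow> slot n \<rho> 0 \<mu> \<longleftrightarrow> (\<exists>x\<ge>0. \<mu> = \<i> * complex_of_real x \<and> ch n x = \<rho>)"
  unfolding slot_def by simp

lemma slot_1: "\<not> \<rho> < 1 \<Longrightarrow> slot n \<rho> 1 \<mu> \<longleftrightarrow> ((\<exists>m. \<mu> = complex_of_real m \<and> 0 \<le> m \<and> m \<le> beta n 1 \<and> st n m = \<rho>)
                        \<or> (\<exists>x\<ge>0. \<mu> = \<i> * complex_of_real x \<and> sh n x = \<rho>))"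
  unfolding slot_def by simp

lemma slot_high: "\<not> \<rho> < 1 \<Longrightarrow> 2 \<le> k \<Longrightarrow> slot n \<rho> k \<mu> \<longleftrightarrow> (\<exists>m. \<mu> = complex_of_real m \<and> alpha n k < m \<and> m \<le> beta n k \<and> Fk n k m = \<rho>)"
  unfolding slot_def by simp

lemma Fk_beta: assumes n: "n \<ge> 2" and k: "k < n" shows "Fk n k (beta n k) = 1"
proof -
  have b: "alpha n k < beta n k" "beta n k \<le> gamma n k" "0 \<le> beta n k"
    using alpha_lt_beta[OF n k] beta_le_gamma[OF n k] beta_nonneg by auto
  have F: "Fk n k (beta n k) = cos (vv n k (beta n k)) / cos (uu n k (beta n k))"
    by (rule Fk_band(2)[OF n k b])
  have "cos (uu n k (beta n k)) > 0" by (rule Fk_band(3)[OF n k b])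
  then show ?thesis unfolding F using uu_beta[OF n, of k] vv_beta[OF n, of k] by simp
qed

lemma Ulow:
  assumes n: "n \<ge> 2" and k: "k < n" and \<rho>: "0 \<le> \<rho>" "\<rho> \<le> 1"
  shows "\<exists>!m. m \<in> {beta n k..gamma n k} \<and> Fk n k m = \<rho>"
proof -
  obtain m0 where m0: "beta n k \<le> m0" "m0 \<le> gamma n k" "Fk n k m0 = \<rho>" using exist_low[OF n k \<rho>] by blast
  have band_of: "alpha n k < m" "0 \<le> m" if "beta n k \<le> m" for m
    using that alpha_lt_beta[OF n k] beta_nonneg[of n k] by auto
  have un: "a = b" if a: "a \<in> {beta n k..gamma n k}" "Fk n k a = \<rho>" and b: "b \<in> {beta n k..gamma n k}" "Fk n k b = \<rho>" for a b
  proof -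
    have ab: "beta n k \<le> a" "a \<le> gamma n k" "beta n k \<le> b" "b \<le> gamma n k" using a b by auto
    consider "\<rho> = 0" | "\<rho> = 1" | "0 < \<rho> \<and> \<rho> < 1" using \<rho> by linarith
    then show "a = b"
    proof cases
      case 1
      then show ?thesis using uniq0[OF n k band_of(1)[OF ab(1)] ab(2) band_of(2)[OF ab(1)]]
          uniq0[OF n k band_of(1)[OF ab(3)] ab(4) band_of(2)[OF ab(3)]] a b by simp
    next
      case 2
      have "a = beta n k \<or> a = 0" using uniq1[OF n k band_of(1)[OF ab(1)] ab(2) band_of(2)[OF ab(1)]] a 2 by simp
      then have "a = beta n k" using ab beta_nonneg[of n k] by auto
      moreover have "b = beta n k \<or> b = 0" using uniq1[OF n k band_of(1)[OF ab(3)] ab(4) band_of(2)[OF ab(3)]] b 2 by simp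
      then have "b = beta n k" using ab beta_nonneg[of n k] by auto
      ultimately show ?thesis by simp
    next
      case 3
      have s: "slot n \<rho> k (complex_of_real a)" "slot n \<rho> k (complex_of_real b)"
        unfolding slot_low[OF conjunct2[OF 3]] using a b by auto
      have r: "0 < \<rho>" "\<rho> \<noteq> 1" using 3 by auto
      have "complex_of_real a = complex_of_real b" by (rule slot_unique[OF n r k s])
      then show ?thesis by simp
    qed
  qed
  show ?thesis by (rule ex1_from[of _ m0]) (use m0 un in auto)
qed

lemma Uhigh:
  assumes n: "n \<ge> 2" and k: "k < n" "2 \<le> k" and \<rho>: "1 \<le> \<rho>"
  shows "\<exists>!m. m \<in> {alpha n k<..beta n k} \<and> Fk n k m = \<rho>"
proof -
  obtain m0 where m0: "alpha n k < m0" "m0 \<le> beta n k" "Fk n k m0 = \<rho>" using exist_high[OF n k \<rho>] by blast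
  have ak: "alpha n k > 0" using n k unfolding alpha_def by auto
  have un: "a = b" if a: "a \<in> {alpha n k<..beta n k}" "Fk n k a = \<rho>" and b: "b \<in> {alpha n k<..beta n k}" "Fk n k b = \<rho>" for a b
  proof -
    have ab: "alpha n k < a" "a \<le> gamma n k" "0 \<le> a" "alpha n k < b" "b \<le> gamma n k" "0 \<le> b"
      using a b ak beta_le_gamma[OF n k(1)] by auto
    show "a = b"
    proof (cases "\<rho> = 1")
      case True
      have "a = beta n k \<or> a = 0" using uniq1[OF n k(1) ab(1-3)] a True by simp
      then have "a = beta n k" using ab ak by auto
      moreover have "b = beta n k \<or> b = 0" using uniq1[OF n k(1) ab(4-6)] b True by simp
      then have "b = beta n k" using ab ak by auto
      ultimately show ?thesis by simp
    next
      case False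
      then have r: "0 < \<rho>" "\<rho> \<noteq> 1" "\<not> \<rho> < 1" using \<rho> by auto
      have s: "slot n \<rho> k (complex_of_real a)" "slot n \<rho> k (complex_of_real b)"
        unfolding slot_high[OF r(3) k(2)] using a b by auto
      have "complex_of_real a = complex_of_real b" by (rule slot_unique[OF n r(1,2) k(1) s])
      then show ?thesis by simp
    qed
  qed
  show ?thesis by (rule ex1_from[of _ m0]) (use m0 un in auto)
qed

lemma Uch:
  assumes n: "n \<ge> 2" and \<rho>: "1 \<le> \<rho>"
  shows "\<exists>!x. x \<in> {0..} \<and> ch n x = \<rho>"
proof -
  obtain x0 where x0: "x0 \<ge> 0" "ch n x0 = \<rho>" using exist_ch[OF n \<rho>] by blast
  have un: "a = b" if a: "a \<in> {0..}" "ch n a = \<rho>" and b: "b \<in> {0..}" "ch n b = \<rho>" for a b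
  proof (cases "\<rho> = 1")
    case True
    have z: "x = 0" if "x \<in> {0..}" "ch n x = 1" for x
    proof (rule ccontr)
      assume "x \<noteq> 0"
      then have "x > 0" using that by simp
      then show False using ch_gt1[OF n] that by fastforce
    qed
    have "a = 0" using z a True by simp
    moreover have "b = 0" using z b True by simp
    ultimately show ?thesis by simp
  next
    case False
    then have r: "0 < \<rho>" "\<rho> \<noteq> 1" "\<not> \<rho> < 1" using \<rho> by auto
    have s: "slot n \<rho> 0 (\<i> * complex_of_real a)" "slot n \<rho> 0 (\<i> * complex_of_real b)"
      unfolding slot_0[OF r(3)] using a b by auto
    have kk: "0 < n" using n by simp
    have "\<i> * complex_of_real a = \<i> * complex_of_real b" by (rule slot_unique[OF n r(1,2) kk s])
    then show ?thesis by simp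
  qed
  show ?thesis by (rule ex1_from[of _ x0]) (use x0 un in auto)
qed

lemma Ush:
  assumes n: "n \<ge> 2" and \<rho>: "xi n \<le> \<rho>"
  shows "\<exists>!x. x \<in> {0..} \<and> sh n x = \<rho>"
proof -
  obtain x0 where x0: "x0 \<ge> 0" "sh n x0 = \<rho>" using exist_sh[OF n \<rho>] by blast
  have r: "0 < \<rho>" "\<rho> \<noteq> 1" "\<not> \<rho> < 1" using \<rho> xi_gt1[OF n] by auto
  have un: "a = b" if a: "a \<in> {0..}" "sh n a = \<rho>" and b: "b \<in> {0..}" "sh n b = \<rho>" for a b
  proof -
    have s: "slot n \<rho> 1 (\<i> * complex_of_real a)" "slot n \<rho> 1 (\<i> * complex_of_real b)"
      unfolding slot_1[OF r(3)] using a b by auto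
    have kk: "1 < n" using n by simp
    have "\<i> * complex_of_real a = \<i> * complex_of_real b" by (rule slot_unique[OF n r(1,2) kk s])
    then show ?thesis by simp
  qed
  show ?thesis by (rule ex1_from[of _ x0]) (use x0 un in auto)
qed

lemma Ust1:
  assumes n: "n \<ge> 2" and \<rho>: "1 \<le> \<rho>" "\<rho> \<le> xi n"
  shows "\<exists>!m. m \<in> {0..beta n 1} \<and> st n m = \<rho>"
proof -
  obtain m0 where m0: "0 \<le> m0" "m0 \<le> beta n 1" "st n m0 = \<rho>" using exist_st1[OF n \<rho>] by blast
  have un: "a = b" if a: "a \<in> {0..beta n 1}" "st n a = \<rho>" and b: "b \<in> {0..beta n 1}" "st n b = \<rho>" for a b
  proof (cases "\<rho> = 1")
    case True
    have one: "x = beta n 1" if x: "x \<in> {0..beta n 1}" "st n x = 1" for x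
    proof -
      have "st n 0 \<noteq> 1" using xi_gt1[OF n] unfolding st_def by simp
      then have x0: "x \<noteq> 0" using x(2) by metis
      have a1: "alpha n 1 = 0" unfolding alpha_def by simp
      have bg: "beta n 1 \<le> gamma n 1" using beta_le_gamma[OF n, of 1] n by simp
      have bx: "alpha n 1 < x" "x \<le> gamma n 1" "0 \<le> x"
        using x(1) x0 bg unfolding a1 by auto
      have F: "Fk n 1 x = 1" using x(2) unfolding Fk_def by simp
      have n1: "1 < n" using n by simp
      have "x = beta n 1 \<or> x = 0" by (rule uniq1[OF n n1 bx F])
      then show ?thesis using x0 by simp
    qed
    have "a \<in> {0..beta n 1}" "st n a = 1" using a True by auto
    then have "a = beta n 1" by (rule one)
    moreover have "b \<in> {0..beta n 1}" "st n b = 1" using b True by auto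
    then have "b = beta n 1" by (rule one)
    ultimately show ?thesis by simp
  next
    case False
    then have r: "0 < \<rho>" "\<rho> \<noteq> 1" "\<not> \<rho> < 1" using \<rho> by auto
    have s: "slot n \<rho> 1 (complex_of_real a)" "slot n \<rho> 1 (complex_of_real b)"
      unfolding slot_1[OF r(3)] using a b by auto
    have kk: "1 < n" using n by simp
    have "complex_of_real a = complex_of_real b" by (rule slot_unique[OF n r(1,2) kk s])
    then show ?thesis by simp
  qed
  show ?thesis by (rule ex1_from[of _ m0]) (use m0 in simp, use un in blast)
qed


lemma tur_prop: "\<exists>!x. x \<in> S \<and> P x \<Longrightarrow> tur P S \<in> S \<and> P (tur P S)"
  unfolding tur_def by (rule theI')

lemma Fk_even: "even k \<Longrightarrow> (\<lambda>m. ct n m = \<rho>) = (\<lambda>m. Fk n k m = \<rho>)"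
  unfolding Fk_def by simp

lemma Fk_odd: "odd k \<Longrightarrow> (\<lambda>m. st n m = \<rho>) = (\<lambda>m. Fk n k m = \<rho>)"
  unfolding Fk_def by simp

lemma mu_high: "k \<ge> 2 \<Longrightarrow> \<rho> \<ge> 1 \<Longrightarrow> mu n \<rho> k = complex_of_real (tur (\<lambda>m. Fk n k m = \<rho>) {alpha n k<..beta n k})"
  unfolding mu_def by (simp add: Fk_even Fk_odd)

lemma mu_low: "k \<ge> 2 \<Longrightarrow> \<not> \<rho> \<ge> 1 \<Longrightarrow> mu n \<rho> k = complex_of_real (tur (\<lambda>m. Fk n k m = \<rho>) {beta n k..gamma n k})"
  unfolding mu_def by (simp add: Fk_even Fk_odd)

lemma mu_0_high: "\<rho> \<ge> 1 \<Longrightarrow> mu n \<rho> 0 = \<i> * complex_of_real (tur (\<lambda>x. ch n x = \<rho>) {0..})"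
  unfolding mu_def by simp

lemma mu_0_low: "\<not> \<rho> \<ge> 1 \<Longrightarrow> mu n \<rho> 0 = complex_of_real (tur (\<lambda>m. Fk n 0 m = \<rho>) {beta n 0..gamma n 0})"
  unfolding mu_def Fk_def beta_def by simp

lemma mu_1_sh: "\<rho> \<ge> xi n \<Longrightarrow> mu n \<rho> 1 = \<i> * complex_of_real (tur (\<lambda>x. sh n x = \<rho>) {0..})"
  unfolding mu_def by simp

lemma mu_1_st: "\<not> \<rho> \<ge> xi n \<Longrightarrow> \<rho> \<ge> 1 \<Longrightarrow> mu n \<rho> 1 = complex_of_real (tur (\<lambda>m. st n m = \<rho>) {0..beta n 1})"
  unfolding mu_def by simp

lemma mu_1_low: "\<not> \<rho> \<ge> 1 \<Longrightarrow> n \<ge> 2 \<Longrightarrow> mu n \<rho> 1 = complex_of_real (tur (\<lambda>m. Fk n 1 m = \<rho>) {beta n 1..gamma n 1})"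
  using xi_gt1[of n] unfolding mu_def Fk_def by simp

lemma mu_props:
  assumes n: "n \<ge> 2" and \<rho>: "\<rho> \<ge> 0" and k: "k < n"
  shows "GR n \<rho> k (mu n \<rho> k) \<and> (mu n \<rho> k = 0 \<longrightarrow> (k = 0 \<and> \<rho> = 1) \<or> (k = 1 \<and> \<rho> = xi n))
     \<and> (0 < \<rho> \<and> \<rho> \<noteq> 1 \<longrightarrow> slot n \<rho> k (mu n \<rho> k))"
proof -
  have ak: "k \<ge> 2 \<Longrightarrow> alpha n k > 0" using n k unfolding alpha_def by auto
  consider "k = 0" | "k = 1" | "k \<ge> 2" by linarith
  then show ?thesis
  proof cases
    case 1
    show ?thesis
    proof (cases "\<rho> \<ge> 1")
      case True
      define x where "x = tur (\<lambda>x. ch n x = \<rho>) {0..}"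
      have x: "x \<ge> 0" "ch n x = \<rho>" using tur_prop[OF Uch[OF n True]] unfolding x_def by auto
      have m: "mu n \<rho> 0 = \<i> * complex_of_real x" unfolding x_def by (rule mu_0_high[OF True])
      have G: "GR n \<rho> k (mu n \<rho> k)" unfolding 1 m by (rule ch_GR[OF n x])
      have Z: "mu n \<rho> k = 0 \<longrightarrow> (k = 0 \<and> \<rho> = 1) \<or> (k = 1 \<and> \<rho> = xi n)"
        using x ch_0[of n] unfolding 1 m by auto
      have S: "0 < \<rho> \<and> \<rho> \<noteq> 1 \<longrightarrow> slot n \<rho> k (mu n \<rho> k)"
        using x True unfolding 1 m by (auto simp: slot_0)
      show ?thesis using G Z S by blast
    next
      case False
      define y where "y = tur (\<lambda>m. Fk n 0 m = \<rho>) {beta n 0..gamma n 0}"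
      have y: "beta n 0 \<le> y" "y \<le> gamma n 0" "Fk n 0 y = \<rho>"
        using tur_prop[OF Ulow[OF n _ \<rho>, of 0]] False n unfolding y_def by auto
      have m: "mu n \<rho> 0 = complex_of_real y" unfolding y_def by (rule mu_0_low[OF False])
      have b: "alpha n 0 < y" "0 \<le> y" using y alpha_lt_beta[OF n, of 0] n beta_nonneg[of n 0] by auto
      have G: "GR n \<rho> k (mu n \<rho> k)" unfolding 1 m using real_root_GR[OF n _ b(1) y(2) b(2) y(3)] n by simp
      have "y \<noteq> 0" using y False unfolding Fk_def ct_def by auto
      then have Z: "mu n \<rho> k = 0 \<longrightarrow> (k = 0 \<and> \<rho> = 1) \<or> (k = 1 \<and> \<rho> = xi n)"
        unfolding 1 m by simp
      have S: "0 < \<rho> \<and> \<rho> \<noteq> 1 \<longrightarrow> slot n \<rho> k (mu n \<rho> k)"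
        using y False unfolding 1 m by (auto simp: slot_low)
      show ?thesis using G Z S by blast
    qed
  next
    case 2
    show ?thesis
    proof (cases "\<rho> \<ge> xi n")
      case True
      have r1: "\<not> \<rho> < 1" using True xi_gt1[OF n] by simp
      define x where "x = tur (\<lambda>x. sh n x = \<rho>) {0..}"
      have x: "x \<ge> 0" "sh n x = \<rho>" using tur_prop[OF Ush[OF n True]] unfolding x_def by auto
      have m: "mu n \<rho> 1 = \<i> * complex_of_real x" unfolding x_def by (rule mu_1_sh[OF True])
      have G: "GR n \<rho> k (mu n \<rho> k)" unfolding 2 m by (rule sh_GR[OF n x])
      have Z: "mu n \<rho> k = 0 \<longrightarrow> (k = 0 \<and> \<rho> = 1) \<or> (k = 1 \<and> \<rho> = xi n)"
        using x unfolding 2 m sh_def by auto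
      have S: "0 < \<rho> \<and> \<rho> \<noteq> 1 \<longrightarrow> slot n \<rho> k (mu n \<rho> k)"
        using x unfolding 2 m slot_1[OF r1] by auto
      show ?thesis using G Z S by blast
    next
      case nx: False
      show ?thesis
      proof (cases "\<rho> \<ge> 1")
        case True
        have r1: "\<not> \<rho> < 1" using True by simp
        define y where "y = tur (\<lambda>m. st n m = \<rho>) {0..beta n 1}"
        have y: "0 \<le> y" "y \<le> beta n 1" "st n y = \<rho>"
          using tur_prop[OF Ust1[OF n True]] nx unfolding y_def by auto
        have m: "mu n \<rho> 1 = complex_of_real y" unfolding y_def by (rule mu_1_st[OF nx True])
        have G: "GR n \<rho> k (mu n \<rho> k)" unfolding 2 m by (rule st1_GR[OF n y])
        have Z: "mu n \<rho> k = 0 \<longrightarrow> (k = 0 \<and> \<rho> = 1) \<or> (k = 1 \<and> \<rho> = xi n)"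
          using y unfolding 2 m st_def by auto
        have S: "0 < \<rho> \<and> \<rho> \<noteq> 1 \<longrightarrow> slot n \<rho> k (mu n \<rho> k)"
          using y unfolding 2 m slot_1[OF r1] by auto
        show ?thesis using G Z S by blast
      next
        case False
        define y where "y = tur (\<lambda>m. Fk n 1 m = \<rho>) {beta n 1..gamma n 1}"
        have n1: "1 < n" using n by simp
        have y: "beta n 1 \<le> y" "y \<le> gamma n 1" "Fk n 1 y = \<rho>"
          using tur_prop[OF Ulow[OF n n1 \<rho>]] False unfolding y_def by auto
        have m: "mu n \<rho> 1 = complex_of_real y" unfolding y_def by (rule mu_1_low[OF False n])
        have b: "alpha n 1 < y" "0 \<le> y" using y alpha_lt_beta[OF n n1] beta_nonneg[of n 1] by auto
        have G: "GR n \<rho> k (mu n \<rho> k)" unfolding 2 m by (rule real_root_GR[OF n n1 b(1) y(2) b(2) y(3)])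
        have "y \<noteq> 0" using b unfolding alpha_def by auto
        then have Z: "mu n \<rho> k = 0 \<longrightarrow> (k = 0 \<and> \<rho> = 1) \<or> (k = 1 \<and> \<rho> = xi n)"
          unfolding 2 m by simp
        have S: "0 < \<rho> \<and> \<rho> \<noteq> 1 \<longrightarrow> slot n \<rho> k (mu n \<rho> k)"
          using y False unfolding 2 m by (auto simp: slot_low)
        show ?thesis using G Z S by blast
      qed
    qed
  next
    case 3
    show ?thesis
    proof (cases "\<rho> \<ge> 1")
      case True
      have r1: "\<not> \<rho> < 1" using True by simp
      define y where "y = tur (\<lambda>m. Fk n k m = \<rho>) {alpha n k<..beta n k}"
      have y: "alpha n k < y" "y \<le> beta n k" "Fk n k y = \<rho>"
        using tur_prop[OF Uhigh[OF n k 3 True]] unfolding y_def by auto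
      have m: "mu n \<rho> k = complex_of_real y" unfolding y_def by (rule mu_high[OF 3 True])
      have b: "0 \<le> y" "y \<le> gamma n k" using y ak[OF 3] beta_le_gamma[OF n k] by auto
      have G: "GR n \<rho> k (mu n \<rho> k)" unfolding m by (rule real_root_GR[OF n k y(1) b(2) b(1) y(3)])
      have "y \<noteq> 0" using y ak[OF 3] by auto
      then have Z: "mu n \<rho> k = 0 \<longrightarrow> (k = 0 \<and> \<rho> = 1) \<or> (k = 1 \<and> \<rho> = xi n)"
        unfolding m by simp
      have S: "0 < \<rho> \<and> \<rho> \<noteq> 1 \<longrightarrow> slot n \<rho> k (mu n \<rho> k)"
        using y unfolding m slot_high[OF r1 3] by auto
      show ?thesis using G Z S by blast
    next
      case False
      define y where "y = tur (\<lambda>m. Fk n k m = \<rho>) {beta n k..gamma n k}"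
      have y: "beta n k \<le> y" "y \<le> gamma n k" "Fk n k y = \<rho>"
        using tur_prop[OF Ulow[OF n k \<rho>]] False unfolding y_def by auto
      have m: "mu n \<rho> k = complex_of_real y" unfolding y_def by (rule mu_low[OF 3 False])
      have b: "alpha n k < y" "0 \<le> y" using y alpha_lt_beta[OF n k] beta_nonneg[of n k] by auto
      have G: "GR n \<rho> k (mu n \<rho> k)" unfolding m by (rule real_root_GR[OF n k b(1) y(2) b(2) y(3)])
      have "y \<noteq> 0" using b ak[OF 3] by auto
      then have Z: "mu n \<rho> k = 0 \<longrightarrow> (k = 0 \<and> \<rho> = 1) \<or> (k = 1 \<and> \<rho> = xi n)"
        unfolding m by simp
      have S: "0 < \<rho> \<and> \<rho> \<noteq> 1 \<longrightarrow> slot n \<rho> k (mu n \<rho> k)"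
        using y False unfolding m by (auto simp: slot_low)
      show ?thesis using G Z S by blast
    qed
  qed
qed


lemma exp_rels:
  fixes \<mu> :: complex
  shows "exp (\<i> * \<mu>) ^ (n + 1) = exp (\<i> * (\<mu> * (of_nat n + 1) / 2)) * exp (\<i> * (\<mu> * (of_nat n + 1) / 2))"
    and "exp (\<i> * \<mu>) ^ n = exp (\<i> * (\<mu> * (of_nat n + 1) / 2)) * exp (\<i> * (\<mu> * (of_nat n - 1) / 2))"
    and "exp (\<i> * \<mu>) * exp (\<i> * (\<mu> * (of_nat n - 1) / 2)) = exp (\<i> * (\<mu> * (of_nat n + 1) / 2))"
proof -
  have "exp (\<i> * (\<mu> * (of_nat n + 1) / 2)) * exp (\<i> * (\<mu> * (of_nat n + 1) / 2))
      = exp (\<i> * (\<mu> * (of_nat n + 1) / 2) + \<i> * (\<mu> * (of_nat n + 1) / 2))" by (rule exp_add[symmetric])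
  also have "\<i> * (\<mu> * (of_nat n + 1) / 2) + \<i> * (\<mu> * (of_nat n + 1) / 2) = of_nat (n + 1) * (\<i> * \<mu>)"
    by (simp add: field_simps)
  also have "exp (of_nat (n + 1) * (\<i> * \<mu>)) = exp (\<i> * \<mu>) ^ (n + 1)" by (rule exp_of_nat_mult)
  finally show "exp (\<i> * \<mu>) ^ (n + 1) = exp (\<i> * (\<mu> * (of_nat n + 1) / 2)) * exp (\<i> * (\<mu> * (of_nat n + 1) / 2))"
    by simp
  have "exp (\<i> * (\<mu> * (of_nat n + 1) / 2)) * exp (\<i> * (\<mu> * (of_nat n - 1) / 2))
      = exp (\<i> * (\<mu> * (of_nat n + 1) / 2) + \<i> * (\<mu> * (of_nat n - 1) / 2))" by (rule exp_add[symmetric])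
  also have "\<i> * (\<mu> * (of_nat n + 1) / 2) + \<i> * (\<mu> * (of_nat n - 1) / 2) = of_nat n * (\<i> * \<mu>)"
    by (simp add: field_simps)
  also have "exp (of_nat n * (\<i> * \<mu>)) = exp (\<i> * \<mu>) ^ n" by (rule exp_of_nat_mult)
  finally show "exp (\<i> * \<mu>) ^ n = exp (\<i> * (\<mu> * (of_nat n + 1) / 2)) * exp (\<i> * (\<mu> * (of_nat n - 1) / 2))"
    by simp
  have "\<i> * \<mu> + \<i> * (\<mu> * (of_nat n - 1) / 2) = \<i> * (\<mu> * (of_nat n + 1) / 2)" by (simp add: field_simps)
  then show "exp (\<i> * \<mu>) * exp (\<i> * (\<mu> * (of_nat n - 1) / 2)) = exp (\<i> * (\<mu> * (of_nat n + 1) / 2))"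
    by (metis exp_add)
qed

lemma sin_exp2: "sin w * (2 * \<i>) = exp (\<i> * w) - inverse (exp (\<i> * w))"
proof -
  have "sin w = (exp (\<i> * w) - inverse (exp (\<i> * w))) / (2 * \<i>)" by (simp add: sin_exp_eq exp_minus)
  moreover have "(2 * \<i> :: complex) \<noteq> 0" by simp
  ultimately show ?thesis by (metis nonzero_eq_divide_eq)
qed

lemma cos_exp2: "cos w * 2 = exp (\<i> * w) + inverse (exp (\<i> * w))"
proof -
  have "cos w = (exp (\<i> * w) + inverse (exp (\<i> * w))) / 2" by (simp add: cos_exp_eq exp_minus)
  then show ?thesis by simp
qed

lemma alg_s:
  fixes Zn1 Zn z p pi q qi sA sB r :: complex
  assumes "p * pi = 1" "q * qi = 1" "z * q = p" "Zn1 = p * p" "Zn = p * q"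
    "sA * (2 * \<i>) = p - pi" "sB * (2 * \<i>) = q - qi" "sA = r * sB"
  shows "Zn1 - r * Zn + r * z - 1 = 0"
  using assms by (Groebner_Basis.algebra)

lemma alg_c:
  fixes Zn1 Zn z p pi q qi sA sB r :: complex
  assumes "p * pi = 1" "q * qi = 1" "z * q = p" "Zn1 = p * p" "Zn = p * q"
    "sA * 2 = p + pi" "sB * 2 = q + qi" "sA = r * sB"
  shows "Zn1 - r * Zn - r * z + 1 = 0"
  using assms by (Groebner_Basis.algebra)

lemma s_pol_zero:
  fixes \<mu> :: complex
  assumes "sin (\<mu> * (of_nat n + 1) / 2) = of_real \<rho> * sin (\<mu> * (of_nat n - 1) / 2)"
  shows "s_pol n \<rho> (exp (\<i> * \<mu>)) = 0"
  unfolding s_pol_def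
  by (rule alg_s[OF _ _ exp_rels(3) exp_rels(1) exp_rels(2) sin_exp2 sin_exp2 assms]) (simp_all add: exp_not_eq_zero)

lemma c_pol_zero:
  fixes \<mu> :: complex
  assumes "cos (\<mu> * (of_nat n + 1) / 2) = of_real \<rho> * cos (\<mu> * (of_nat n - 1) / 2)"
  shows "c_pol n \<rho> (exp (\<i> * \<mu>)) = 0"
  unfolding c_pol_def
  by (rule alg_c[OF _ _ exp_rels(3) exp_rels(1) exp_rels(2) cos_exp2 cos_exp2 assms]) (simp_all add: exp_not_eq_zero)

lemma sum_even: "((z::complex)^2 - 1) * (\<Sum>k<n. z^(2*k)) = z^(2*n) - 1"
proof (induction n)
  case 0 then show ?case by simp
next
  case (Suc n)
  have e: "z^(2 * Suc n) = z^2 * z^(2*n)" by (simp add: power_add[symmetric])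
  have "(z^2 - 1) * (\<Sum>k<Suc n. z^(2*k)) = (z^2 - 1) * (\<Sum>k<n. z^(2*k)) + (z^2 - 1) * z^(2*n)"
    by (simp add: algebra_simps)
  then show ?case unfolding e Suc.IH by (simp add: algebra_simps)
qed

lemma sum_odd: "((z::complex)^2 - 1) * (\<Sum>k<n. z^(2*k+1)) = z^(2*n+1) - z"
proof (induction n)
  case 0 then show ?case by simp
next
  case (Suc n)
  have e: "z^(2 * Suc n + 1) = z^2 * z^(2*n+1)" by (simp add: power_add[symmetric])
  have "(z^2 - 1) * (\<Sum>k<Suc n. z^(2*k+1)) = (z^2 - 1) * (\<Sum>k<n. z^(2*k+1)) + (z^2 - 1) * z^(2*n+1)"
    by (simp add: algebra_simps)
  then show ?case unfolding e Suc.IH by (simp add: algebra_simps)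
qed

lemma alg_p:
  fixes z w r Se So :: complex
  assumes "(z^2 - 1) * Se = w^2 - z^2" "(z^2 - 1) * So = z * w^2 - z"
  shows "(z^2 - 1) * (w^2 + (1 + r^2) * Se - 2 * r * So + 1) = (z * w - r * w + r * z - 1) * (z * w - r * w - r * z + 1)"
  using assms by (Groebner_Basis.algebra)

lemma p2n_factor:
  assumes n: "n \<ge> 1"
  shows "(z^2 - 1) * p2n n \<rho> z = s_pol n \<rho> z * c_pol n \<rho> z"
proof -
  have e1: "{1..n-1} = {..<n} - {0}" using n by auto
  have se: "(\<Sum>k\<in>{1..n-1}. z^(2*k)) = (\<Sum>k<n. z^(2*k)) - 1"
    unfolding e1 using n by (simp add: sum_diff1)
  have e2: "{0..n-1} = {..<n}" using n by auto
  have A: "(z^2 - 1) * (\<Sum>k\<in>{1..n-1}. z^(2*k)) = (z^n)^2 - z^2"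
    unfolding se using sum_even[of z n] by (simp add: algebra_simps power_mult power_mult_distrib[symmetric] mult.commute)
  have B: "(z^2 - 1) * (\<Sum>k\<in>{0..n-1}. z^(2*k+1)) = z * (z^n)^2 - z"
    unfolding e2 using sum_odd[of z n] by (simp add: power_add power_mult mult.commute)
  have C: "z^(2*n) = (z^n)^2" "z^(n+1) = z * z^n" by (simp_all add: power_mult mult.commute)
  show ?thesis unfolding p2n_def s_pol_def c_pol_def C
    using alg_p[OF A B, of "complex_of_real \<rho>"] by simp
qed


lemma exp_sq_ne1:
  fixes \<mu> :: complex assumes s: "sin \<mu> \<noteq> 0" shows "exp (\<i> * \<mu>) ^ 2 \<noteq> 1"
proof
  assume e2: "exp (\<i> * \<mu>) ^ 2 = 1"
  define e where "e = exp (\<i> * \<mu>)"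
  have e0: "e \<noteq> 0" unfolding e_def by simp
  have ee: "e * e = 1" using e2 unfolding e_def by (simp add: power2_eq_square)
  then have ie: "inverse e = e" using e0 by (metis inverse_unique)
  have "cos \<mu> * 2 = e + inverse e" unfolding e_def by (rule cos_exp2)
  then have "cos \<mu> = e" using ie by simp
  then have "(cos \<mu>)^2 = 1" using ee by (simp add: power2_eq_square)
  then have "(sin \<mu>)^2 = 0" using sin_cos_squared_add[of \<mu>] by simp
  then show False using s by simp
qed

lemma alg_quad:
  fixes z e ie r c :: complex
  assumes "e * ie = 1" "c * 2 = e + ie" "z * (1 - 2 * r * c + r^2) = (z - r) * (1 - r * z)"
  shows "r * ((z - e) * (z - ie)) = 0"
  using assms by (Groebner_Basis.algebra)

lemma alg_eig:
  fixes z ie r c :: complex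
  assumes "z * ie = 1" "c * 2 = z + ie"
  shows "(z - r) * (1 - r * z) = z * (1 - 2 * r * c + r^2)"
  using assms by (Groebner_Basis.algebra)

lemma type_core:
  fixes \<mu> :: complex and P :: "complex \<Rightarrow> complex"
  assumes \<rho>: "0 < \<rho>" "\<rho> \<noteq> 1" and d: "lam_formula1_denom \<rho> \<mu> \<noteq> 0"
    and Pe: "P (exp (\<i> * \<mu>)) = 0" and Pie: "P (exp (- (\<i> * \<mu>))) = 0"
    and pe: "p2n n \<rho> (exp (\<i> * \<mu>)) = 0"
  shows "(\<exists>z. p2n n \<rho> z = 0 \<and> eig_of_zero \<rho> z = lam_formula1 \<rho> \<mu>) \<and>
    (\<forall>z. p2n n \<rho> z = 0 \<and> eig_of_zero \<rho> z = lam_formula1 \<rho> \<mu> \<longrightarrow> P z = 0 \<and> P (inverse z) = 0)"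
proof -
  define e where "e = exp (\<i> * \<mu>)"
  define r where "r = complex_of_real \<rho>"
  define D where "D = lam_formula1_denom \<rho> \<mu>"
  have D_def': "D = 1 - 2 * r * cos \<mu> + r^2" unfolding D_def r_def lam_formula1_denom_def ..
  have e0: "e \<noteq> 0" unfolding e_def by simp
  have ie: "exp (- (\<i> * \<mu>)) = inverse e" unfolding e_def by (simp add: exp_minus)
  have eie: "e * inverse e = 1" using e0 by simp
  have ce: "cos \<mu> * 2 = e + inverse e" unfolding e_def by (rule cos_exp2)
  have r2: "1 - r^2 \<noteq> 0"
  proof
    assume "1 - r^2 = 0"
    then have "complex_of_real (1 - \<rho>^2) = 0" unfolding r_def by (simp add: of_real_power)
    then have "\<rho>^2 = 1" by (simp only: of_real_eq_0_iff)
    with \<rho> show False by (simp add: power2_eq_1_iff)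
  qed
  have r0: "r \<noteq> 0" unfolding r_def using \<rho> by simp
  have d0: "D \<noteq> 0" using d unfolding D_def .
  have lam: "lam_formula1 \<rho> \<mu> = (1 - r^2) / D" unfolding lam_formula1_def D_def' r_def ..
  have l0: "lam_formula1 \<rho> \<mu> \<noteq> 0" unfolding lam using r2 d0 by simp
  have eig_e: "eig_of_zero \<rho> e = lam_formula1 \<rho> \<mu>"
  proof -
    have "(e - r) * (1 - r * e) = e * D" unfolding D_def' by (rule alg_eig[OF eie ce])
    then show ?thesis unfolding eig_of_zero_def lam r_def[symmetric] using e0 d0 by simp
  qed
  have ex: "\<exists>z. p2n n \<rho> z = 0 \<and> eig_of_zero \<rho> z = lam_formula1 \<rho> \<mu>"
    using pe eig_e unfolding e_def by blast
  have all: "P z = 0 \<and> P (inverse z) = 0" if z: "p2n n \<rho> z = 0" "eig_of_zero \<rho> z = lam_formula1 \<rho> \<mu>" for z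
  proof -
    have den: "(z - r) * (1 - r * z) \<noteq> 0"
    proof
      assume "(z - r) * (1 - r * z) = 0"
      then have "eig_of_zero \<rho> z = 0" unfolding eig_of_zero_def r_def by simp
      then show False using z l0 by simp
    qed
    have "z * (1 - r^2) / ((z - r) * (1 - r * z)) = (1 - r^2) / D" using z(2) unfolding eig_of_zero_def lam r_def .
    then have "z * (1 - r^2) * D = (1 - r^2) * ((z - r) * (1 - r * z))" using den d0 by (simp add: divide_simps)
    then have "(1 - r^2) * (z * D) = (1 - r^2) * ((z - r) * (1 - r * z))" by (simp add: mult_ac)
    then have "z * D = (z - r) * (1 - r * z)" using r2 by (simp only: mult_cancel_left) simp
    then have "r * ((z - e) * (z - inverse e)) = 0" unfolding D_def' by (rule alg_quad[OF eie ce])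
    then have "z = e \<or> z = inverse e" using r0 by simp
    then show ?thesis
    proof
      assume "z = e"
      then show ?thesis using Pe Pie ie unfolding e_def by simp
    next
      assume "z = inverse e"
      then show ?thesis using Pe Pie ie e0 unfolding e_def by simp
    qed
  qed
  show ?thesis using ex all by blast
qed

lemma type1_lemma:
  fixes \<mu> :: complex
  assumes n: "n \<ge> 1" and \<rho>: "0 < \<rho>" "\<rho> \<noteq> 1" and s: "sin \<mu> \<noteq> 0" and d: "lam_formula1_denom \<rho> \<mu> \<noteq> 0"
    and cond: "sin (\<mu> * (of_nat n + 1) / 2) = of_real \<rho> * sin (\<mu> * (of_nat n - 1) / 2)"
  shows "eig_type1 n \<rho> (lam_formula1 \<rho> \<mu>)"
proof -
  have Pe: "s_pol n \<rho> (exp (\<i> * \<mu>)) = 0" by (rule s_pol_zero[OF cond])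
  have cond': "sin ((- \<mu>) * (of_nat n + 1) / 2) = of_real \<rho> * sin ((- \<mu>) * (of_nat n - 1) / 2)"
    using cond by simp
  have Pie: "s_pol n \<rho> (exp (- (\<i> * \<mu>))) = 0" using s_pol_zero[OF cond'] by simp
  have "(exp (\<i> * \<mu>) ^ 2 - 1) * p2n n \<rho> (exp (\<i> * \<mu>)) = 0"
    using p2n_factor[OF n] Pe by simp
  then have pe: "p2n n \<rho> (exp (\<i> * \<mu>)) = 0" using exp_sq_ne1[OF s] by simp
  show ?thesis unfolding eig_type1_def by (rule type_core[OF \<rho> d Pe Pie pe])
qed

lemma type2_lemma:
  fixes \<mu> :: complex
  assumes n: "n \<ge> 1" and \<rho>: "0 < \<rho>" "\<rho> \<noteq> 1" and s: "sin \<mu> \<noteq> 0" and d: "lam_formula1_denom \<rho> \<mu> \<noteq> 0"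
    and cond: "cos (\<mu> * (of_nat n + 1) / 2) = of_real \<rho> * cos (\<mu> * (of_nat n - 1) / 2)"
  shows "eig_type2 n \<rho> (lam_formula1 \<rho> \<mu>)"
proof -
  have Pe: "c_pol n \<rho> (exp (\<i> * \<mu>)) = 0" by (rule c_pol_zero[OF cond])
  have cond': "cos ((- \<mu>) * (of_nat n + 1) / 2) = of_real \<rho> * cos ((- \<mu>) * (of_nat n - 1) / 2)"
    using cond by simp
  have Pie: "c_pol n \<rho> (exp (- (\<i> * \<mu>))) = 0" using c_pol_zero[OF cond'] by simp
  have "(exp (\<i> * \<mu>) ^ 2 - 1) * p2n n \<rho> (exp (\<i> * \<mu>)) = 0"
    using p2n_factor[OF n] Pe by simp
  then have pe: "p2n n \<rho> (exp (\<i> * \<mu>)) = 0" using exp_sq_ne1[OF s] by simp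
  show ?thesis unfolding eig_type2_def by (rule type_core[OF \<rho> d Pe Pie pe])
qed


lemma monic_eq:
  fixes p :: "complex poly"
  assumes dp: "degree p = n" "coeff p n = 1" and inj: "inj_on r {..<n}" and rt: "\<And>k. k < n \<Longrightarrow> poly p (r k) = 0"
  shows "p = (\<Prod>k<n. [:- r k, 1:])"
proof (rule ccontr)
  assume ne: "p \<noteq> (\<Prod>k<n. [:- r k, 1:])"
  define q where "q = (\<Prod>k<n. [:- r k, 1:])"
  have dq: "degree q = n \<and> coeff q n = 1" unfolding q_def lessThan_atLeast0
    by (rule degree_prod_monic) auto
  have rq: "poly q (r k) = 0" if "k < n" for k
    unfolding q_def poly_prod using that by (intro prod_zero) auto
  define d where "d = p - q"
  have d0: "d \<noteq> 0" using ne unfolding d_def q_def by simp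
  have cd: "coeff d n = 0" unfolding d_def using dp dq by simp
  have "degree d \<le> n" unfolding d_def using degree_diff_le[of p n q] dp dq by simp
  moreover have "degree d \<noteq> n" using cd d0 by (metis leading_coeff_0_iff)
  ultimately have dl: "degree d < n" by simp
  have sub: "r ` {..<n} \<subseteq> {x. poly d x = 0}" using rt rq unfolding d_def by auto
  have "card (r ` {..<n}) \<le> card {x. poly d x = 0}"
    by (rule card_mono[OF poly_roots_finite[OF d0] sub])
  also have "\<dots> \<le> degree d" by (rule card_poly_roots_bound[OF d0])
  finally have "n \<le> degree d" using card_image[OF inj] by simp
  with dl show False by simp
qed

definition Jm :: "nat \<Rightarrow> complex mat" where "Jm m = Matrix.mat m m (\<lambda>_. 1)"

lemma Jm_carrier: "Jm m \<in> carrier_mat m m" unfolding Jm_def by simp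

lemma Jm_delete: "i < Suc m \<Longrightarrow> mat_delete (Jm (Suc m)) i i = Jm m"
  unfolding Jm_def mat_delete_def by (rule eq_matI) auto

lemma Jm_root0:
  assumes N: "N \<ge> 2" shows "poly (char_poly (Jm N)) 0 = 0"
proof -
  define v :: "complex Matrix.vec" where "v = Matrix.vec N (\<lambda>i. (if i = 0 then 1 else 0) - (if i = 1 then 1 else 0))"
  have v: "v \<in> carrier_vec N" unfolding v_def by simp
  have vne: "v \<noteq> 0\<^sub>v N"
  proof
    assume "v = 0\<^sub>v N"
    then have "v $ 0 = 0" using N by simp
    then show False using N unfolding v_def by simp
  qed
  have s: "(\<Sum>i<N. (if i = 0 then 1 else 0) - (if i = 1 then 1 else (0::complex))) = 0"
    using N by (simp add: sum_subtractf)
  have Jv: "Jm N *\<^sub>v v = 0 \<cdot>\<^sub>v v"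
  proof (rule eq_vecI)
    fix i assume "i < dim_vec (0 \<cdot>\<^sub>v v)"
    then have i: "i < N" using v by simp
    have "(Jm N *\<^sub>v v) $ i = (\<Sum>j<N. (if j = 0 then 1 else 0) - (if j = 1 then 1 else (0::complex)))"
      using i unfolding Jm_def v_def by (auto simp: scalar_prod_def lessThan_atLeast0 intro!: sum.cong)
    then show "(Jm N *\<^sub>v v) $ i = (0 \<cdot>\<^sub>v v) $ i" using s i v by simp
  qed (use v in \<open>simp add: Jm_def\<close>)
  have "eigenvector (Jm N) v 0" unfolding eigenvector_def using v vne Jv Jm_carrier[of N] by simp
  then have "eigenvalue (Jm N) 0" unfolding eigenvalue_def by blast
  then show ?thesis using eigenvalue_root_char_poly[OF Jm_carrier] by simp
qed

lemma cp_ones: "m \<ge> 1 \<Longrightarrow> char_poly (Jm m) = monom 1 m - Polynomial.smult (of_nat m) (monom 1 (m - 1))"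
proof (induction m rule: nat_induct_at_least)
  case base
  have ut: "upper_triangular (Jm 1)" unfolding upper_triangular_def Jm_def by auto
  have "char_poly (Jm 1) = (\<Prod>a\<leftarrow>diag_mat (Jm 1). [:- a, 1:])"
    by (rule char_poly_upper_triangular[OF Jm_carrier ut])
  also have "\<dots> = [:-1, 1:]" unfolding diag_mat_def Jm_def by simp
  also have "\<dots> = monom 1 1 - Polynomial.smult (of_nat 1) (monom 1 (1 - 1))"
    by (simp add: monom_Suc one_pCons)
  finally show ?case .
next
  case (Suc m)
  define p where "p = char_poly (Jm (Suc m))"
  define q :: "complex poly" where "q = monom 1 (Suc m) - Polynomial.smult (of_nat (Suc m)) (monom 1 m)"
  have "pderiv p = (\<Sum>i<Suc m. char_poly (mat_delete (Jm (Suc m)) i i))"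
    unfolding p_def by (rule pderiv_char_poly[OF Jm_carrier])
  also have "\<dots> = (\<Sum>i<Suc m. char_poly (Jm m))" by (rule sum.cong) (auto simp: Jm_delete)
  also have "\<dots> = of_nat (Suc m) * char_poly (Jm m)" by simp
  also have "\<dots> = Polynomial.smult (of_nat (Suc m)) (monom 1 m - Polynomial.smult (of_nat m) (monom 1 (m - 1)))"
    unfolding Suc.IH of_nat_mult_conv_smult ..
  finally have dp: "pderiv p = Polynomial.smult (of_nat (Suc m)) (monom 1 m - Polynomial.smult (of_nat m) (monom 1 (m - 1)))" .
  have dq: "pderiv q = Polynomial.smult (of_nat (Suc m)) (monom 1 m - Polynomial.smult (of_nat m) (monom 1 (m - 1)))"
    unfolding q_def by (simp add: pderiv_diff pderiv_smult pderiv_monom smult_diff_right smult_monom)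
  have "pderiv (p - q) = 0" using dp dq by (simp add: pderiv_diff)
  then obtain c where c: "p - q = [:c:]" using pderiv_iszero by blast
  have "poly p 0 = 0" unfolding p_def using Jm_root0[of "Suc m"] Suc.hyps by simp
  moreover have "poly q 0 = 0" unfolding q_def using Suc.hyps by (simp add: poly_monom)
  ultimately have "poly (p - q) 0 = 0" by simp
  then have "c = 0" unfolding c by simp
  then show ?case using c unfolding p_def q_def by simp
qed


lemma tur_eq: "\<exists>!x. x \<in> S \<and> P x \<Longrightarrow> a \<in> S \<Longrightarrow> P a \<Longrightarrow> tur P S = a"
  unfolding tur_def by (rule the1_equality) auto

lemma mu_rho1:
  assumes n: "n \<ge> 2" and k: "k < n"
  shows "mu n 1 k = (if k = 0 then 0 else complex_of_real (beta n k))"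
proof -
  consider "k = 0" | "k = 1" | "k \<ge> 2" by linarith
  then show ?thesis
  proof cases
    case 1
    have "tur (\<lambda>x. ch n x = 1) {0..} = 0" by (rule tur_eq[OF Uch[OF n order_refl]]) (auto simp: ch_0)
    then show ?thesis using 1 mu_0_high[of 1 n] by simp
  next
    case 2
    have x: "\<not> 1 \<ge> xi n" using xi_gt1[OF n] by simp
    have "tur (\<lambda>m. st n m = 1) {0..beta n 1} = beta n 1"
      by (rule tur_eq[OF Ust1[OF n order_refl]]) (use xi_gt1[OF n] st_beta1[OF n] beta_nonneg[of n 1] in auto)
    then show ?thesis using 2 mu_1_st[OF x order_refl] by simp
  next
    case 3
    have "tur (\<lambda>m. Fk n k m = 1) {alpha n k<..beta n k} = beta n k"
      by (rule tur_eq[OF Uhigh[OF n k 3 order_refl]]) (use alpha_lt_beta[OF n k] Fk_beta[OF n k] in auto)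
    then show ?thesis using 3 mu_high[OF 3, of 1 n] by simp
  qed
qed

lemma lam_rho1:
  assumes n: "n \<ge> 2" and k: "k < n"
  shows "lam n 1 k = (if k = 0 then of_nat n else 0)"
proof (cases "k = 0")
  case True
  then show ?thesis unfolding lam_def lam_formula2_def using mu_rho1[OF n k] by simp
next
  case False
  have b: "beta n k > 0" using False n unfolding beta_def by simp
  have "sin (of_nat n * complex_of_real (beta n k)) = complex_of_real (sin (real k * pi))"
    unfolding beta_def using n by (simp add: sin_of_real[symmetric] field_simps)
  also have "\<dots> = 0" by simp
  finally show ?thesis unfolding lam_def lam_formula2_def using mu_rho1[OF n k] False b by simp
qed

lemma lam_formula_gen:
  assumes n: "n \<ge> 2" and \<rho>: "\<rho> \<ge> 0" and k: "k < n" and nz: "\<not> (k = 0 \<and> \<rho> = 1)"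
  shows "lam_formula1_denom \<rho> (mu n \<rho> k) \<noteq> 0 \<and> lam n \<rho> k = lam_formula1 \<rho> (mu n \<rho> k)"
proof -
  note M = mu_props[OF n \<rho> k]
  have "mu n \<rho> k \<noteq> 0 \<or> k = 1" using M nz by auto
  then show ?thesis using GR_formula[OF n _ ] M unfolding lam_def by blast
qed

lemma cp_main:
  assumes n: "n \<ge> 2" and \<rho>: "\<rho> \<ge> 0"
  shows "char_poly (map_mat complex_of_real (KMS n \<rho>)) = (\<Prod>k<n. [:- lam n \<rho> k, 1:])"
proof -
  let ?A = "map_mat complex_of_real (KMS n \<rho>)"
  consider "\<rho> = 0" | "\<rho> = 1" | "0 < \<rho> \<and> \<rho> \<noteq> 1" using \<rho> by linarith
  then show ?thesis
  proof cases
    case 1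
    have lam1: "lam n \<rho> k = 1" if "k < n" for k
      using lam_formula_gen[OF n \<rho> that] 1 unfolding lam_formula1_def by simp
    have ut: "upper_triangular ?A" unfolding upper_triangular_def KMS_def 1 by auto
    have "char_poly ?A = (\<Prod>a\<leftarrow>diag_mat ?A. [:- a, 1:])"
      by (rule char_poly_upper_triangular[OF KMS_carrier ut])
    also have "\<dots> = (\<Prod>a\<leftarrow>map (\<lambda>i. 1) [0..<n]. [:- a, 1:])"
      unfolding diag_mat_def KMS_def 1 by (intro arg_cong[where f = prod_list]) auto
    also have "\<dots> = [:-1, 1:] ^ n" by (simp add: map_replicate_const prod_list_replicate)
    also have "\<dots> = (\<Prod>k<n. [:- lam n \<rho> k, 1:])" using lam1 by simp
    finally show ?thesis .
  next
    case 2
    have AJ: "?A = Jm n" unfolding KMS_def Jm_def 2 by (rule eq_matI) auto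
    have "char_poly ?A = monom 1 n - Polynomial.smult (of_nat n) (monom 1 (n - 1))"
      unfolding AJ using cp_ones[of n] n by simp
    also have "\<dots> = [:- of_nat n, 1:] * [:0, 1:] ^ (n - 1)"
    proof -
      have "poly (monom 1 n - Polynomial.smult (of_nat n) (monom 1 (n - 1))) x = poly ([:- of_nat n, 1:] * [:0, 1:] ^ (n - 1)) x" for x :: complex
      proof -
        have "x ^ n = x * x ^ (n - 1)" using n by (cases n) auto
        then show ?thesis by (simp add: poly_monom algebra_simps)
      qed
      then show ?thesis by (intro poly_eq_poly_eq_iff[THEN iffD1] ext)
    qed
    also have "\<dots> = (\<Prod>k<n. [:- lam n \<rho> k, 1:])"
    proof -
      have s: "{..<n} = insert 0 {1..<n}" using n by auto
      have "(\<Prod>k<n. [:- lam n \<rho> k, 1:]) = [:- lam n \<rho> 0, 1:] * (\<Prod>k\<in>{1..<n}. [:- lam n \<rho> k, 1:])"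
        unfolding s by (subst prod.insert) auto
      also have "(\<Prod>k\<in>{1..<n}. [:- lam n \<rho> k, 1:]) = (\<Prod>k\<in>{1..<n}. [:0, 1:])"
        using lam_rho1[OF n] 2 by (intro prod.cong) auto
      also have "\<dots> = [:0, 1:] ^ (n - 1)" by simp
      also have "lam n \<rho> 0 = of_nat n" using lam_rho1[OF n, of 0] 2 n by simp
      finally show ?thesis by simp
    qed
    finally show ?thesis .
  next
    case 3
    have dp: "degree (char_poly ?A) = n" "coeff (char_poly ?A) n = 1"
      using degree_monic_char_poly[OF KMS_carrier] by auto
    have LF: "lam_formula1_denom \<rho> (mu n \<rho> k) \<noteq> 0 \<and> lam n \<rho> k = lam_formula1 \<rho> (mu n \<rho> k)" if "k < n" for k
      using lam_formula_gen[OF n \<rho> that] 3 by auto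
    have rt: "poly (char_poly ?A) (lam n \<rho> k) = 0" if k: "k < n" for k
    proof -
      have "GR n \<rho> k (mu n \<rho> k)" using mu_props[OF n \<rho> k] by simp
      then have "eigenvalue ?A (lam_formula1 \<rho> (mu n \<rho> k))" using GR_eig[OF n \<rho>] 3 by auto
      then show ?thesis using LF[OF k] eigenvalue_root_char_poly[OF KMS_carrier] by simp
    qed
    have inj: "inj_on (lam n \<rho>) {..<n}"
    proof (rule inj_onI)
      fix i j assume ij: "i \<in> {..<n}" "j \<in> {..<n}" "lam n \<rho> i = lam n \<rho> j"
      have Mi: "GR n \<rho> i (mu n \<rho> i)" "slot n \<rho> i (mu n \<rho> i)" using mu_props[OF n \<rho>, of i] ij 3 by auto
      have Mj: "GR n \<rho> j (mu n \<rho> j)" "slot n \<rho> j (mu n \<rho> j)" using mu_props[OF n \<rho>, of j] ij 3 by auto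
      have Di: "inD (mu n \<rho> i)" "inD (mu n \<rho> j)" using Mi Mj unfolding GR_def by auto
      have "mu n \<rho> i = mu n \<rho> j"
        using formula1_inj[of \<rho> "mu n \<rho> i" "mu n \<rho> j"] LF[of i] LF[of j] ij Di 3 by auto
      then show "i = j"
      proof -
        assume e: "mu n \<rho> i = mu n \<rho> j"
        show "i = j"
        proof (rule ccontr)
          assume "i \<noteq> j"
          then have "i < j \<or> j < i" by linarith
          then show False using slot_disj[OF n, of \<rho>] 3 ij Mi Mj e by auto
        qed
      qed
    qed
    show ?thesis by (rule monic_eq[OF dp inj rt])
  qed
qed


lemma sin_over_lim: "((\<lambda>z::complex. sin (c * z) / z) \<longlongrightarrow> c) (at 0)"
proof -
  have "((\<lambda>z. sin (c * z)) has_field_derivative cos (c * 0) * c) (at (0::complex))"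
    by (auto intro!: derivative_eq_intros)
  then have "((\<lambda>y. (sin (c * y) - sin (c * 0)) / (y - 0)) \<longlongrightarrow> cos (c * 0) * c) (at (0::complex))"
    by (simp only: has_field_derivative_iff)
  then show ?thesis by simp
qed

lemma g_cont: "isCont (\<lambda>z::complex. if z = 0 then of_nat n else sin (of_nat n * z) / sin z) 0"
proof -
  have "((\<lambda>z::complex. (sin (of_nat n * z) / z) / (sin (1 * z) / z)) \<longlongrightarrow> of_nat n / 1) (at 0)"
    by (intro tendsto_divide sin_over_lim) auto
  moreover have "eventually (\<lambda>z::complex. (sin (of_nat n * z) / z) / (sin (1 * z) / z)
      = (if z = 0 then of_nat n else sin (of_nat n * z) / sin z)) (at 0)"
    unfolding eventually_at_filter by (auto simp: divide_simps)
  ultimately have "((\<lambda>z::complex. if z = 0 then of_nat n else sin (of_nat n * z) / sin z) \<longlongrightarrow> of_nat n) (at 0)"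
    using Lim_transform_eventually by fastforce
  then show ?thesis unfolding isCont_def by simp
qed

lemma ct_le_cos:
  assumes n: "n \<ge> 2" and y: "0 \<le> y" "y \<le> gamma n 0"
  shows "ct n y \<le> cos y"
proof -
  define b where "b = y * (real n - 1) / 2"
  have a: "y * (real n + 1) / 2 = b + y" unfolding b_def by (simp add: field_simps)
  have g: "y * (real n + 1) \<le> pi" using y unfolding gamma_def by (simp add: field_simps)
  have b0: "0 \<le> b" unfolding b_def using y n by simp
  have "b * 2 < pi"
  proof -
    have "y * (real n - 1) \<le> y * (real n + 1)" using y by (simp add: mult_left_mono)
    moreover have "y * (real n - 1) < pi"
    proof (cases "y = 0")
      case True then show ?thesis by simp
    next
      case False
      then have "y * (real n - 1) < y * (real n + 1)" using y by simp
      then show ?thesis using g by simp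
    qed
    ultimately show ?thesis unfolding b_def by simp
  qed
  then have bpi: "b < pi / 2" by simp
  have cb: "cos b > 0" using b0 bpi by (intro cos_gt_zero_pi) auto
  have yp: "y \<le> pi" using y gamma_lt_pi[OF n, of 0] n by simp
  have sb: "sin b \<ge> 0" using b0 bpi by (intro sin_ge_zero) auto
  have sy: "sin y \<ge> 0" using y yp by (intro sin_ge_zero) auto
  have "cos (b + y) = cos b * cos y - sin b * sin y" by (rule cos_add)
  also have "\<dots> \<le> cos b * cos y" using sb sy by simp
  finally have "cos (b + y) \<le> cos b * cos y" .
  then show ?thesis unfolding ct_def a b_def[symmetric] using cb by (simp add: divide_le_eq mult.commute)
qed

lemma mu0_small:
  assumes n: "n \<ge> 2" and e: "\<epsilon> > 0"
  shows "\<exists>d>0. \<forall>r. 0 \<le> r \<longrightarrow> \<bar>r - 1\<bar> < d \<longrightarrow> norm (mu n r 0) < \<epsilon>"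
proof -
  define e' where "e' = min \<epsilon> 1"
  have e': "0 < e'" "e' \<le> \<epsilon>" "e' \<le> 1" using e unfolding e'_def by auto
  have c: "cos e' < 1"
  proof -
    have "cos e' < cos 0" using e' by (intro cos_monotone_0_pi) (auto intro: order_trans[OF _ pi_ge_two])
    then show ?thesis by simp
  qed
  have h: "cosh e' > 1" using cosh_real_nonneg_less_iff[of 0 e'] e' by simp
  define d where "d = min (1 - cos e') (cosh e' - 1)"
  have d: "d > 0" unfolding d_def using c h by simp
  have "norm (mu n r 0) < \<epsilon>" if r: "0 \<le> r" "\<bar>r - 1\<bar> < d" for r
  proof (cases "r \<ge> 1")
    case True
    define x where "x = tur (\<lambda>x. ch n x = r) {0..}"
    have x: "x \<ge> 0" "ch n x = r" using tur_prop[OF Uch[OF n True]] unfolding x_def by auto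
    have m: "mu n r 0 = \<i> * complex_of_real x" unfolding x_def by (rule mu_0_high[OF True])
    have "cosh x \<le> r" using ch_ge_cosh[OF n x(1)] x(2) by simp
    also have "r < cosh e'" using r True unfolding d_def by simp
    finally have "x < e'" using cosh_real_nonneg_less_iff[of x e'] x e' by simp
    then show ?thesis unfolding m using x e' by (simp add: norm_mult)
  next
    case False
    define y where "y = tur (\<lambda>m. Fk n 0 m = r) {beta n 0..gamma n 0}"
    have n0: "0 < n" using n by simp
    have y: "beta n 0 \<le> y" "y \<le> gamma n 0" "Fk n 0 y = r"
      using tur_prop[OF Ulow[OF n n0 r(1)]] False unfolding y_def by auto
    have m: "mu n r 0 = complex_of_real y" unfolding y_def by (rule mu_0_low[OF False])
    have y0: "0 \<le> y" using y unfolding beta_def by simp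
    have "cos e' < r" using r False unfolding d_def by simp
    also have "r \<le> cos y" using ct_le_cos[OF n y0 y(2)] y(3) unfolding Fk_def by simp
    finally have ce: "cos e' < cos y" .
    have "y < e'"
    proof (rule ccontr)
      assume "\<not> y < e'"
      then have "cos y \<le> cos e'" using e' y(2) gamma_lt_pi[OF n n0] by (intro cos_monotone_0_pi_le) auto
      with ce show False by simp
    qed
    then show ?thesis unfolding m using y0 e' by simp
  qed
  then show ?thesis using d by blast
qed

lemma limit_main:
  assumes n: "n \<ge> 2"
  shows "((\<lambda>r. lam_formula1 r (mu n r 0)) \<longlongrightarrow> lam n 1 0) (at 1 within {0..})"
proof -
  define g where "g = (\<lambda>z::complex. if z = 0 then of_nat n else sin (of_nat n * z) / sin z)"
  have M: "((\<lambda>r. mu n r 0) \<longlongrightarrow> 0) (at 1 within {0..})"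
  proof (rule tendstoI)
    fix \<epsilon> :: real assume e: "\<epsilon> > 0"
    obtain d where d: "d > 0" "\<And>r. 0 \<le> r \<Longrightarrow> \<bar>r - 1\<bar> < d \<Longrightarrow> norm (mu n r 0) < \<epsilon>"
      using mu0_small[OF n e] by blast
    show "eventually (\<lambda>r. dist (mu n r 0) 0 < \<epsilon>) (at 1 within {0..})"
      unfolding eventually_at using d by (auto simp: dist_real_def)
  qed
  have G: "((\<lambda>r. g (mu n r 0)) \<longlongrightarrow> g 0) (at 1 within {0..})"
    using isCont_tendsto_compose[OF g_cont[of n, folded g_def] M] .
  have g0: "g 0 = lam n 1 0" unfolding g_def using lam_rho1[OF n, of 0] n by simp
  have ev: "eventually (\<lambda>r. g (mu n r 0) = lam_formula1 r (mu n r 0)) (at 1 within {0..})"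
    unfolding eventually_at_filter
  proof (rule always_eventually, intro allI impI)
    fix r :: real assume r: "r \<noteq> 1" "r \<in> {0..}"
    have "lam n r 0 = lam_formula1 r (mu n r 0)" using lam_formula_gen[OF n _ _ , of r 0] r n by auto
    moreover have "lam n r 0 = g (mu n r 0)" unfolding lam_def lam_formula2_def g_def by simp
    ultimately show "g (mu n r 0) = lam_formula1 r (mu n r 0)" by simp
  qed
  show ?thesis using Lim_transform_eventually[OF G ev] g0 by simp
qed

lemma formula_clause:
  assumes n: "n \<ge> 2" and \<rho>: "\<rho> \<ge> 0"
  shows "\<forall>k<n. (lam_formula1_denom \<rho> (mu n \<rho> k) \<noteq> 0 \<longrightarrow>
               lam n \<rho> k = lam_formula1 \<rho> (mu n \<rho> k)) \<and>
             (lam_formula1_denom \<rho> (mu n \<rho> k) = 0 \<longrightarrow>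
               ((\<lambda>r. lam_formula1 r (mu n r k)) \<longlongrightarrow> lam n \<rho> k) (at \<rho> within {0..}))"
proof (intro allI impI)
  fix k assume k: "k < n"
  show "(lam_formula1_denom \<rho> (mu n \<rho> k) \<noteq> 0 \<longrightarrow>
               lam n \<rho> k = lam_formula1 \<rho> (mu n \<rho> k)) \<and>
             (lam_formula1_denom \<rho> (mu n \<rho> k) = 0 \<longrightarrow>
               ((\<lambda>r. lam_formula1 r (mu n r k)) \<longlongrightarrow> lam n \<rho> k) (at \<rho> within {0..}))"
  proof (cases "k = 0 \<and> \<rho> = 1")
    case True
    have "mu n 1 0 = 0" using mu_rho1[OF n, of 0] n by simp
    then have "lam_formula1_denom \<rho> (mu n \<rho> k) = 0" using True unfolding lam_formula1_denom_def by simp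
    then show ?thesis using limit_main[OF n] True by simp
  next
    case False
    then show ?thesis using lam_formula_gen[OF n \<rho> k] by simp
  qed
qed

lemma types_clause:
  assumes n: "n \<ge> 2" and \<rho>: "0 < \<rho>" "\<rho> \<noteq> 1" "\<rho> \<noteq> xi n"
  shows "\<forall>k<n. (odd k \<longrightarrow> eig_type1 n \<rho> (lam n \<rho> k)) \<and> (even k \<longrightarrow> eig_type2 n \<rho> (lam n \<rho> k))"
proof (intro allI impI)
  fix k assume k: "k < n"
  have r0: "\<rho> \<ge> 0" using \<rho> by simp
  note M = mu_props[OF n r0 k]
  have m0: "mu n \<rho> k \<noteq> 0" using M \<rho> by auto
  have G: "GR n \<rho> k (mu n \<rho> k)" using M by simp
  have s: "sin (mu n \<rho> k) \<noteq> 0" using inD_sin[OF _ m0] G unfolding GR_def by auto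
  have LF: "lam_formula1_denom \<rho> (mu n \<rho> k) \<noteq> 0 \<and> lam n \<rho> k = lam_formula1 \<rho> (mu n \<rho> k)"
    using lam_formula_gen[OF n r0 k] \<rho> by simp
  have n1: "n \<ge> 1" using n by simp
  show "(odd k \<longrightarrow> eig_type1 n \<rho> (lam n \<rho> k)) \<and> (even k \<longrightarrow> eig_type2 n \<rho> (lam n \<rho> k))"
  proof (cases "even k")
    case True
    then have c: "cos (mu n \<rho> k * (of_nat n + 1) / 2) = of_real \<rho> * cos (mu n \<rho> k * (of_nat n - 1) / 2)"
      using G m0 unfolding GR_def by auto
    then show ?thesis using type2_lemma[OF n1 \<rho>(1,2) s _ c] LF True by simp
  next
    case False
    then have c: "sin (mu n \<rho> k * (of_nat n + 1) / 2) = of_real \<rho> * sin (mu n \<rho> k * (of_nat n - 1) / 2)"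
      using G m0 unfolding GR_def by auto
    then show ?thesis using type1_lemma[OF n1 \<rho>(1,2) s _ c] LF False by simp
  qed
qed


theorem theorem6p5:
  fixes n :: nat and \<rho> :: real
  assumes "n \<ge> 2" and "\<rho> \<ge> 0"
  shows
    \<comment> \<open>unique roots: k = 0\<close>
    "(\<rho> \<ge> 1 \<longrightarrow> (\<exists>!x. x \<in> {0..} \<and> ch n x = \<rho>)) \<and>
     (\<rho> \<le> 1 \<longrightarrow> (\<exists>!m. m \<in> {0..gamma n 0} \<and> ct n m = \<rho>)) \<and>
     \<comment> \<open>k = 1\<close>
     (\<rho> \<ge> xi n \<longrightarrow> (\<exists>!x. x \<in> {0..} \<and> sh n x = \<rho>)) \<and>
     (1 \<le> \<rho> \<and> \<rho> \<le> xi n \<longrightarrow> (\<exists>!m. m \<in> {0..beta n 1} \<and> st n m = \<rho>)) \<and>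
     (\<rho> \<le> 1 \<longrightarrow> (\<exists>!m. m \<in> {beta n 1..gamma n 1} \<and> st n m = \<rho>)) \<and>
     \<comment> \<open>even k \<ge> 2\<close>
     (\<forall>k. 2 \<le> k \<and> k < n \<and> even k \<longrightarrow>
        (\<rho> \<ge> 1 \<longrightarrow> (\<exists>!m. m \<in> {alpha n k<..beta n k} \<and> ct n m = \<rho>)) \<and>
        (\<rho> \<le> 1 \<longrightarrow> (\<exists>!m. m \<in> {beta n k..gamma n k} \<and> ct n m = \<rho>))) \<and>
     \<comment> \<open>odd k \<ge> 3\<close>
     (\<forall>k. 3 \<le> k \<and> k < n \<and> odd k \<longrightarrow>
        (\<rho> \<ge> 1 \<longrightarrow> (\<exists>!m. m \<in> {alpha n k<..beta n k} \<and> st n m = \<rho>)) \<and>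
        (\<rho> \<le> 1 \<longrightarrow> (\<exists>!m. m \<in> {beta n k..gamma n k} \<and> st n m = \<rho>))) \<and>
     \<comment> \<open>the eigenvalues (with multiplicity) are lam_0 .. lam_{n-1}\<close>
     char_poly (map_mat complex_of_real (KMS n \<rho>)) = (\<Prod>k<n. [:- lam n \<rho> k, 1:]) \<and>
     \<comment> \<open>the alternative formula (limit in rho where indeterminate)\<close>
     (\<forall>k<n. (lam_formula1_denom \<rho> (mu n \<rho> k) \<noteq> 0 \<longrightarrow>
               lam n \<rho> k = lam_formula1 \<rho> (mu n \<rho> k)) \<and>
             (lam_formula1_denom \<rho> (mu n \<rho> k) = 0 \<longrightarrow>
               ((\<lambda>r. lam_formula1 r (mu n r k)) \<longlongrightarrow> lam n \<rho> k) (at \<rho> within {0..}))) \<and>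
     \<comment> \<open>types\<close>
     (0 < \<rho> \<and> \<rho> \<noteq> 1 \<and> \<rho> \<noteq> xi n \<longrightarrow>
        (\<forall>k<n. (odd k \<longrightarrow> eig_type1 n \<rho> (lam n \<rho> k)) \<and>
               (even k \<longrightarrow> eig_type2 n \<rho> (lam n \<rho> k))))"
proof -
  note n = assms(1) and r = assms(2)
  have n0: "0 < n" and n1: "1 < n" using n by auto
  have C1: "\<rho> \<ge> 1 \<longrightarrow> (\<exists>!x. x \<in> {0..} \<and> ch n x = \<rho>)" using Uch[OF n] by blast
  have C2: "\<rho> \<le> 1 \<longrightarrow> (\<exists>!m. m \<in> {0..gamma n 0} \<and> ct n m = \<rho>)"
  proof
    assume "\<rho> \<le> 1"
    from Ulow[OF n n0 r this] show "\<exists>!m. m \<in> {0..gamma n 0} \<and> ct n m = \<rho>"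
      unfolding Fk_def beta_def by simp
  qed
  have C3: "\<rho> \<ge> xi n \<longrightarrow> (\<exists>!x. x \<in> {0..} \<and> sh n x = \<rho>)" using Ush[OF n] by blast
  have C4: "1 \<le> \<rho> \<and> \<rho> \<le> xi n \<longrightarrow> (\<exists>!m. m \<in> {0..beta n 1} \<and> st n m = \<rho>)" using Ust1[OF n] by blast
  have C5: "\<rho> \<le> 1 \<longrightarrow> (\<exists>!m. m \<in> {beta n 1..gamma n 1} \<and> st n m = \<rho>)"
  proof
    assume "\<rho> \<le> 1"
    from Ulow[OF n n1 r this] show "\<exists>!m. m \<in> {beta n 1..gamma n 1} \<and> st n m = \<rho>"
      unfolding Fk_def by simp
  qed
  have C6: "\<forall>k. 2 \<le> k \<and> k < n \<and> even k \<longrightarrow>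
        (\<rho> \<ge> 1 \<longrightarrow> (\<exists>!m. m \<in> {alpha n k<..beta n k} \<and> ct n m = \<rho>)) \<and>
        (\<rho> \<le> 1 \<longrightarrow> (\<exists>!m. m \<in> {beta n k..gamma n k} \<and> ct n m = \<rho>))"
  proof (intro allI impI conjI)
    fix k assume k: "2 \<le> k \<and> k < n \<and> even k"
    show "\<rho> \<ge> 1 \<Longrightarrow> \<exists>!m. m \<in> {alpha n k<..beta n k} \<and> ct n m = \<rho>"
      using Uhigh[OF n _ _ , of k \<rho>] k unfolding Fk_def by simp
    show "\<rho> \<le> 1 \<Longrightarrow> \<exists>!m. m \<in> {beta n k..gamma n k} \<and> ct n m = \<rho>"
      using Ulow[OF n _ r, of k] k unfolding Fk_def by simp
  qed
  have C7: "\<forall>k. 3 \<le> k \<and> k < n \<and> odd k \<longrightarrow>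
        (\<rho> \<ge> 1 \<longrightarrow> (\<exists>!m. m \<in> {alpha n k<..beta n k} \<and> st n m = \<rho>)) \<and>
        (\<rho> \<le> 1 \<longrightarrow> (\<exists>!m. m \<in> {beta n k..gamma n k} \<and> st n m = \<rho>))"
  proof (intro allI impI conjI)
    fix k assume k: "3 \<le> k \<and> k < n \<and> odd k"
    show "\<rho> \<ge> 1 \<Longrightarrow> \<exists>!m. m \<in> {alpha n k<..beta n k} \<and> st n m = \<rho>"
      using Uhigh[OF n _ _ , of k \<rho>] k unfolding Fk_def by simp
    show "\<rho> \<le> 1 \<Longrightarrow> \<exists>!m. m \<in> {beta n k..gamma n k} \<and> st n m = \<rho>"
      using Ulow[OF n _ r, of k] k unfolding Fk_def by simp
  qed
  have C8: "char_poly (map_mat complex_of_real (KMS n \<rho>)) = (\<Prod>k<n. [:- lam n \<rho> k, 1:])"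
    by (rule cp_main[OF n r])
  have C9: "\<forall>k<n. (lam_formula1_denom \<rho> (mu n \<rho> k) \<noteq> 0 \<longrightarrow>
               lam n \<rho> k = lam_formula1 \<rho> (mu n \<rho> k)) \<and>
             (lam_formula1_denom \<rho> (mu n \<rho> k) = 0 \<longrightarrow>
               ((\<lambda>r. lam_formula1 r (mu n r k)) \<longlongrightarrow> lam n \<rho> k) (at \<rho> within {0..}))"
    by (rule formula_clause[OF n r])
  have C10: "0 < \<rho> \<and> \<rho> \<noteq> 1 \<and> \<rho> \<noteq> xi n \<longrightarrow>
        (\<forall>k<n. (odd k \<longrightarrow> eig_type1 n \<rho> (lam n \<rho> k)) \<and>
               (even k \<longrightarrow> eig_type2 n \<rho> (lam n \<rho> k)))"
    using types_clause[OF n] by blast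
  show ?thesis using C1 C2 C3 C4 C5 C6 C7 C8 C9 C10 by blast
qed


end
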